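(* Let $\boldsymbol\zeta$ be a restriction sequence for $\mathsf{DIHP}(G,n,\alpha,K)$ that is not cyclic, and suppose $\|\boldsymbol\zeta\|\le\gamma n$ for some $\gamma\in(0,1)$. Then $g_{\boldsymbol\zeta}$ is $(n,20N^2,\gamma n\log_2N,0)$-bounded.
   Context: $N\ge2$, $\mathbb Z_N=\mathbb Z/N\mathbb Z$. $G=(\mathcal V,\mathcal E,N,(\mu_{\mathsf e}))$ is a distribution-labeled $k$-graph: finite set $\mathcal V$, finite multiset $\mathcal E$ of ordered $k$-tuples of distinct vertices, one-wise independent distributions $\mu_{\mathsf e}$ on $\mathbb Z_N^k$ (each coordinate marginal uniform), pmf $\mu_{\mathsf e}(\cdot)$. For $\mathsf e=(\mathsf v_1,\dots,\mathsf v_k)$, $\mathcal U_{\mathsf e}=(\{\mathsf v_1\}\times[n],\dots,\{\mathsf v_k\}\times[n])$. A restriction sequence is $\boldsymbol\zeta=(\mathbf z^{(\mathsf e,j)})_{(\mathsf e,j)\in\mathcal E\times[K]}$, each $\mathbf z^{(\mathsf e,j)}:\prod\mathcal U_{\mathsf e}\to\mathbb Z_N^k\cup\{\mathtt{nil}\}$ with support $\{e:\mathbf z(e)\ne\mathtt{nil}\}$ a matching of size at most $\alpha n$. $H_{\boldsymbol\zeta}$ is the $k$-uniform hypergraph on $\mathcal V\times[n]$ with edge set $\bigcup\mathrm{supp}\mathbf z^{(\mathsf e,j)}$; $\|\boldsymbol\zeta\|=\sum_i|V_i|^2$ over connected components $V_i$ of $H_{\boldsymbol\zeta}$ with at least two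 vertices. $\boldsymbol\zeta$ is cyclic if the supports are not pairwise disjoint or some $\ell\ge1$ edges of $H_{\boldsymbol\zeta}$ together cover at most $\ell(k-1)$ vertices. $g_{\boldsymbol\zeta}(x)=\prod_{(\mathsf e,j)}\prod_{e\in\mathrm{supp}\mathbf z^{(\mathsf e,j)}}N^k\mu_{\mathsf e}(x_{|e}-\mathbf z^{(\mathsf e,j)}(e))$ for $x\in\mathbb Z_N^{\mathcal V\times[n]}$, where $x_{|e}=(x_{v_1},\dots,x_{v_k})$. Fourier on $\mathbb Z_N^\Lambda$: $\chi_b(x)=\exp(\frac{2\pi\mathrm i}N\sum_vb_vx_v)$, $\widehat f(b)=\mathbb E_x[f(x)\overline{\chi_b(x)}]$, $\|f^{=d}\|_{\mathsf W}=\sum_{b:|\mathrm{supp}b|=d}|\widehat f(b)|$. $F_C(n,d,s^* )=(C\sqrt{n\max\{s^*,d\}}/d)^{d/2}$. $f\ge0$ is $(n,C,s^*,\delta)$-bounded if $|\mathbb E f-1|\le\delta$, $\|f^{=d}\|_{\mathsf W}\le F_C(n,d,s^* )$ for all integers $1\le d\le C^{-2}n$, and $\|f\|_\infty\le2^{s^*}$. *)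

theory Defs
  imports "HOL-Analysis.Analysis" "HOL-Library.FuncSet"
begin

text \<open>Z_N is represented by the natural numbers below N; Z_N^k by lists of length k
  with entries below N.  [n] is rendered as the index set {..<n}.\<close>

definition ZNk :: "nat \<Rightarrow> nat \<Rightarrow> nat list set" where
  "ZNk N k = {t. length t = k \<and> set t \<subseteq> {..<N}}"

definition tsub :: "nat \<Rightarrow> nat list \<Rightarrow> nat list \<Rightarrow> nat list" where
  "tsub N a c = map2 (\<lambda>x y. (x + N - y) mod N) a c"

text \<open>Distribution-labeled k-graph: vertex set V, edge multiset given by a finite index
  set EI with edge map ev (each edge an ordered k-tuple of distinct vertices), and
  one-wise independent pmfs mu e on Z_N^k.\<close>
definition dlk_graph ::
  "nat \<Rightarrow> nat \<Rightarrow> 'v set \<Rightarrow> 'e set \<Rightarrow> ('e \<Rightarrow> 'v list) \<Rightarrow> ('e \<Rightarrow> nat list \<Rightarrow> real) \<Rightarrow> bool" where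
  "dlk_graph N k V EI ev mu \<longleftrightarrow>
     finite V \<and> finite EI \<and>
     (\<forall>e\<in>EI. length (ev e) = k \<and> distinct (ev e) \<and> set (ev e) \<subseteq> V) \<and>
     (\<forall>e\<in>EI. (\<forall>t\<in>ZNk N k. mu e t \<ge> 0) \<and> (\<Sum>t\<in>ZNk N k. mu e t) = 1 \<and>
        (\<forall>i<k. \<forall>a<N. (\<Sum>t\<in>{t\<in>ZNk N k. t ! i = a}. mu e t) = 1 / real N))"

text \<open>An element of prod U_e is encoded by the list of its second coordinates (in [n]);
  the corresponding hyperedge of V x [n] is the set of its k vertices.\<close>
definition Ue :: "nat \<Rightarrow> nat \<Rightarrow> nat list set" where
  "Ue k n = {is. length is = k \<and> set is \<subseteq> {..<n}}"

definition hedge :: "('e \<Rightarrow> 'v list) \<Rightarrow> 'e \<Rightarrow> nat list \<Rightarrow> ('v \<times> nat) set" where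
  "hedge ev e is = set (zip (ev e) is)"

definition supp :: "('e \<Rightarrow> nat \<Rightarrow> nat list \<Rightarrow> nat list option) \<Rightarrow> 'e \<Rightarrow> nat \<Rightarrow> nat list set" where
  "supp z e j = {is. z e j is \<noteq> None}"

text \<open>Restriction sequence for DIHP(G,n,alpha,K); indices (e,j) range over EI x {..<K};
  None plays the role of nil.\<close>
definition restr_seq ::
  "nat \<Rightarrow> nat \<Rightarrow> 'e set \<Rightarrow> ('e \<Rightarrow> 'v list) \<Rightarrow> nat \<Rightarrow> real \<Rightarrow> nat
   \<Rightarrow> ('e \<Rightarrow> nat \<Rightarrow> nat list \<Rightarrow> nat list option) \<Rightarrow> bool" where
  "restr_seq N k EI ev n \<alpha> K z \<longleftrightarrow>
     (\<forall>e\<in>EI. \<forall>j<K.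
        (\<forall>is c. z e j is = Some c \<longrightarrow> is \<in> Ue k n \<and> c \<in> ZNk N k) \<and>
        (\<forall>is\<in>supp z e j. \<forall>is'\<in>supp z e j. is \<noteq> is' \<longrightarrow> hedge ev e is \<inter> hedge ev e is' = {}) \<and>
        real (card (supp z e j)) \<le> \<alpha> * real n)"

definition Hedges ::
  "'e set \<Rightarrow> ('e \<Rightarrow> 'v list) \<Rightarrow> nat \<Rightarrow> ('e \<Rightarrow> nat \<Rightarrow> nat list \<Rightarrow> nat list option) \<Rightarrow> ('v \<times> nat) set set" where
  "Hedges EI ev K z = {hedge ev e is | e j is. e \<in> EI \<and> j < K \<and> is \<in> supp z e j}"

definition cyclic ::
  "nat \<Rightarrow> 'e set \<Rightarrow> ('e \<Rightarrow> 'v list) \<Rightarrow> nat \<Rightarrow> ('e \<Rightarrow> nat \<Rightarrow> nat list \<Rightarrow> nat list option) \<Rightarrow> bool" where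
  "cyclic k EI ev K z \<longleftrightarrow>
     (\<exists>e j e' j' is is'. e \<in> EI \<and> e' \<in> EI \<and> j < K \<and> j' < K \<and> (e, j) \<noteq> (e', j') \<and>
        is \<in> supp z e j \<and> is' \<in> supp z e' j' \<and> hedge ev e is = hedge ev e' is') \<or>
     (\<exists>S. S \<subseteq> Hedges EI ev K z \<and> finite S \<and> S \<noteq> {} \<and>
        real (card (\<Union>S)) \<le> real (card S) * (real k - 1))"

definition Hcomp ::
  "'v set \<Rightarrow> nat \<Rightarrow> ('v \<times> nat) set set \<Rightarrow> ('v \<times> nat) \<Rightarrow> ('v \<times> nat) set" where
  "Hcomp V n HE x = {y \<in> V \<times> {..<n}. (x, y) \<in> {(u, w). \<exists>h\<in>HE. u \<in> h \<and> w \<in> h}\<^sup>*}"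

definition znorm ::
  "'v set \<Rightarrow> 'e set \<Rightarrow> ('e \<Rightarrow> 'v list) \<Rightarrow> nat \<Rightarrow> nat \<Rightarrow> ('e \<Rightarrow> nat \<Rightarrow> nat list \<Rightarrow> nat list option) \<Rightarrow> nat" where
  "znorm V EI ev n K z =
     (\<Sum>C\<in>{C \<in> Hcomp V n (Hedges EI ev K z) ` (V \<times> {..<n}). card C \<ge> 2}. card C ^ 2)"

definition gz ::
  "nat \<Rightarrow> nat \<Rightarrow> 'e set \<Rightarrow> ('e \<Rightarrow> 'v list) \<Rightarrow> ('e \<Rightarrow> nat list \<Rightarrow> real) \<Rightarrow> nat
   \<Rightarrow> ('e \<Rightarrow> nat \<Rightarrow> nat list \<Rightarrow> nat list option) \<Rightarrow> ('v \<times> nat \<Rightarrow> nat) \<Rightarrow> real" where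
  "gz N k EI ev mu K z x =
     (\<Prod>e\<in>EI. \<Prod>j\<in>{..<K}. \<Prod>is\<in>supp z e j.
        real N ^ k * mu e (tsub N (map x (zip (ev e) is)) (the (z e j is))))"

definition ZNdom :: "nat \<Rightarrow> 'a set \<Rightarrow> ('a \<Rightarrow> nat) set" where
  "ZNdom N L = (PiE L (\<lambda>_. {..<N}))"

definition chi :: "nat \<Rightarrow> 'a set \<Rightarrow> ('a \<Rightarrow> nat) \<Rightarrow> ('a \<Rightarrow> nat) \<Rightarrow> complex" where
  "chi N L b x = exp (2 * of_real pi * \<i> / of_nat N * of_nat (\<Sum>v\<in>L. b v * x v))"

definition fhat :: "nat \<Rightarrow> 'a set \<Rightarrow> (('a \<Rightarrow> nat) \<Rightarrow> real) \<Rightarrow> ('a \<Rightarrow> nat) \<Rightarrow> complex" where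
  "fhat N L f b = (\<Sum>x\<in>ZNdom N L. of_real (f x) * cnj (chi N L b x)) / of_nat (card (ZNdom N L))"

definition expect :: "nat \<Rightarrow> 'a set \<Rightarrow> (('a \<Rightarrow> nat) \<Rightarrow> real) \<Rightarrow> real" where
  "expect N L f = (\<Sum>x\<in>ZNdom N L. f x) / real (card (ZNdom N L))"

definition walsh_level :: "nat \<Rightarrow> 'a set \<Rightarrow> (('a \<Rightarrow> nat) \<Rightarrow> real) \<Rightarrow> nat \<Rightarrow> real" where
  "walsh_level N L f d = (\<Sum>b\<in>{b \<in> ZNdom N L. card {v \<in> L. b v \<noteq> 0} = d}. cmod (fhat N L f b))"

definition FC :: "real \<Rightarrow> nat \<Rightarrow> nat \<Rightarrow> real \<Rightarrow> real" where
  "FC C n d s = (C * sqrt (real n * max s (real d)) / real d) powr (real d / 2)"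

definition bounded_fn ::
  "nat \<Rightarrow> 'a set \<Rightarrow> nat \<Rightarrow> real \<Rightarrow> real \<Rightarrow> real \<Rightarrow> (('a \<Rightarrow> nat) \<Rightarrow> real) \<Rightarrow> bool" where
  "bounded_fn N L n C s \<delta> f \<longleftrightarrow>
     (\<forall>x\<in>ZNdom N L. f x \<ge> 0) \<and>
     \<bar>expect N L f - 1\<bar> \<le> \<delta> \<and>
     (\<forall>d::nat. 1 \<le> d \<and> real d \<le> real n / C\<^sup>2 \<longrightarrow> walsh_level N L f d \<le> FC C n d s) \<and>
     (\<forall>x\<in>ZNdom N L. \<bar>f x\<bar> \<le> 2 powr s)"

end

theory Submission
  imports Defs
begin

definition mrg :: "'a set \<Rightarrow> ('a \<Rightarrow> 'b) \<Rightarrow> ('a \<Rightarrow> 'b) \<Rightarrow> 'a \<Rightarrow> 'b" where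
  "mrg P y x = (\<lambda>v. if v \<in> P then y v else x v)"

definition dep_only :: "nat \<Rightarrow> 'a set \<Rightarrow> 'a set \<Rightarrow> (('a \<Rightarrow> nat) \<Rightarrow> 'c) \<Rightarrow> bool" where
  "dep_only N L D h \<longleftrightarrow> (\<forall>x\<in>ZNdom N L. \<forall>y\<in>ZNdom N L. (\<forall>v\<in>D. x v = y v) \<longrightarrow> h x = h y)"

lemma mrg_in:
  assumes "x \<in> ZNdom N (L - P)" "y \<in> ZNdom N P" "P \<subseteq> L"
  shows "mrg P y x \<in> ZNdom N L"
  using assms unfolding ZNdom_def mrg_def PiE_def extensional_def by auto

lemma mrg_restrict:
  assumes "x \<in> ZNdom N L" "P \<subseteq> L"
  shows "mrg P (restrict x P) (restrict x (L - P)) = x"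
proof
  fix v show "mrg P (restrict x P) (restrict x (L - P)) v = x v"
    using assms by (cases "v \<in> L") (auto simp: mrg_def ZNdom_def PiE_def extensional_def)
qed

lemma sum_ZNdom_split:
  fixes f :: "('a \<Rightarrow> nat) \<Rightarrow> 'c::comm_monoid_add"
  assumes "P \<subseteq> L"
  shows "(\<Sum>x\<in>ZNdom N L. f x) = (\<Sum>x\<in>ZNdom N (L - P). \<Sum>y\<in>ZNdom N P. f (mrg P y x))"
proof -
  have "(\<Sum>x\<in>ZNdom N L. f x) = (\<Sum>(x,y)\<in>ZNdom N (L - P) \<times> ZNdom N P. f (mrg P y x))"
  proof (rule sum.reindex_bij_witness[of _ "\<lambda>(x,y). mrg P y x" "\<lambda>z. (restrict z (L - P), restrict z P)"])
    fix a assume "a \<in> ZNdom N L" thus "(case (restrict a (L - P), restrict a P) of (x, y) \<Rightarrow> mrg P y x) = a"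
      using mrg_restrict assms by auto
  next
    fix a assume "a \<in> ZNdom N L" thus "(restrict a (L - P), restrict a P) \<in> ZNdom N (L - P) \<times> ZNdom N P"
      using assms by (auto simp: ZNdom_def PiE_def Pi_def)
  next
    fix b assume b: "b \<in> ZNdom N (L - P) \<times> ZNdom N P"
    obtain x y where xy: "b = (x, y)" by force
    have "restrict (mrg P y x) (L - P) = x" "restrict (mrg P y x) P = y"
      using b xy by (auto simp: fun_eq_iff mrg_def ZNdom_def PiE_def extensional_def)
    thus "(restrict (case b of (x, y) \<Rightarrow> mrg P y x) (L - P), restrict (case b of (x, y) \<Rightarrow> mrg P y x) P) = b"
      using xy by simp
  next
    fix b assume b: "b \<in> ZNdom N (L - P) \<times> ZNdom N P"
    thus "(case b of (x, y) \<Rightarrow> mrg P y x) \<in> ZNdom N L" using mrg_in assms by auto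
  qed (simp add: mrg_restrict[OF _ assms])
  also have "\<dots> = (\<Sum>x\<in>ZNdom N (L - P). \<Sum>y\<in>ZNdom N P. f (mrg P y x))"
    by (simp add: sum.cartesian_product)
  finally show ?thesis .
qed

lemma card_ZNdom: "finite L \<Longrightarrow> card (ZNdom N L) = N ^ card L"
  by (simp add: ZNdom_def card_PiE)

lemma finite_ZNdom: "finite L \<Longrightarrow> finite (ZNdom N L)"
  by (simp add: ZNdom_def finite_PiE)

definition marg :: "nat \<Rightarrow> 'a set \<Rightarrow> 'a set \<Rightarrow> (('a \<Rightarrow> nat) \<Rightarrow> real) \<Rightarrow> bool" where
  "marg N L P F \<longleftrightarrow> (\<forall>x\<in>ZNdom N (L - P). (\<Sum>y\<in>ZNdom N P. F (mrg P y x)) = real N ^ card P)"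

lemma peel_step:
  fixes R :: "('a \<Rightarrow> nat) \<Rightarrow> complex"
  assumes L: "finite L" and PL: "P \<subseteq> L" and N: "N \<ge> 1"
    and m: "marg N L P F" and R: "dep_only N L (L - P) R"
  shows "(\<Sum>x\<in>ZNdom N L. of_real (F x) * R x) = (\<Sum>x\<in>ZNdom N L. R x)"
proof -
  have fP: "finite P" using L PL finite_subset by blast
  have inner: "(\<Sum>y\<in>ZNdom N P. of_real (F (mrg P y x)) * R (mrg P y x))
       = (\<Sum>y\<in>ZNdom N P. R (mrg P y x))" if x: "x \<in> ZNdom N (L - P)" for x
  proof -
    define y0 where "y0 = (\<lambda>v\<in>P. (0::nat))"
    have y0: "y0 \<in> ZNdom N P" using N by (auto simp: y0_def ZNdom_def)
    have eq: "R (mrg P y x) = R (mrg P y0 x)" if "y \<in> ZNdom N P" for y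
    proof -
      have "\<forall>v\<in>L - P. mrg P y x v = mrg P y0 x v" by (simp add: mrg_def)
      then show ?thesis using R mrg_in[OF x that PL] mrg_in[OF x y0 PL] unfolding dep_only_def by blast
    qed
    have "(\<Sum>y\<in>ZNdom N P. of_real (F (mrg P y x)) * R (mrg P y x))
        = (\<Sum>y\<in>ZNdom N P. of_real (F (mrg P y x))) * R (mrg P y0 x)"
      by (simp add: sum_distrib_right eq)
    also have "(\<Sum>y\<in>ZNdom N P. of_real (F (mrg P y x))) = (of_real (real N ^ card P) :: complex)"
      using m x unfolding marg_def by (metis of_real_sum)
    also have "(\<Sum>y\<in>ZNdom N P. R (mrg P y x)) = of_nat (card (ZNdom N P)) * R (mrg P y0 x)"
      by (simp add: eq)
    ultimately show ?thesis using card_ZNdom[OF fP] by simp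
  qed
  show ?thesis
    by (subst (1 2) sum_ZNdom_split[OF PL]) (simp add: inner)
qed

lemma dep_only_mono: "dep_only N L D h \<Longrightarrow> D \<subseteq> D' \<Longrightarrow> dep_only N L D' h"
  unfolding dep_only_def by blast

lemma peel:
  fixes F :: "'t \<Rightarrow> ('a \<Rightarrow> nat) \<Rightarrow> real" and Vt :: "'t \<Rightarrow> 'a set"
    and h :: "('a \<Rightarrow> nat) \<Rightarrow> complex"
  assumes L: "finite L" and N: "N \<ge> 1" and S: "finite S"
    and sub: "\<forall>t\<in>S. Vt t \<subseteq> L"
    and dep: "\<forall>t\<in>S. dep_only N L (Vt t) (F t)"
    and mg: "\<forall>t\<in>S. \<forall>p. (p \<in> Vt t \<or> Vt t = {}) \<longrightarrow> marg N L (Vt t - {p}) (F t)"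
    and leaf: "\<forall>S'\<subseteq>S. S' \<noteq> {} \<longrightarrow> (\<exists>t\<in>S'. card (Vt t \<inter> (\<Union>(Vt ` (S' - {t})) \<union> {w})) \<le> 1)"
    and h: "dep_only N L (L - (\<Union>(Vt ` S) - {w})) h"
  shows "(\<Sum>x\<in>ZNdom N L. of_real (\<Prod>t\<in>S. F t x) * h x) = (\<Sum>x\<in>ZNdom N L. h x)"
  using S sub dep mg leaf h
proof (induction S arbitrary: h rule: finite_psubset_induct)
  case (psubset S)
  show ?case
  proof (cases "S = {}")
    case True then show ?thesis by simp
  next
    case False
    then obtain t where t: "t \<in> S" and tl: "card (Vt t \<inter> (\<Union>(Vt ` (S - {t})) \<union> {w})) \<le> 1"
      using psubset.prems(4) by blast
    define Ot where "Ot = \<Union>(Vt ` (S - {t}))"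
    define Q where "Q = Vt t \<inter> (Ot \<union> {w})"
    have fVt: "finite (Vt t)" using psubset.prems(1) t L finite_subset by blast
    have fQ: "finite Q" using fVt by (simp add: Q_def)
    have cQ: "card Q \<le> 1" using tl by (simp add: Q_def Ot_def)
    obtain p where p: "p \<in> Vt t \<or> Vt t = {}" and pQ: "Q \<subseteq> {p}"
    proof (cases "Q = {}")
      case True
      show ?thesis
      proof (cases "Vt t = {}")
        case True then show ?thesis using that \<open>Q = {}\<close> by blast
      next
        case False then obtain p where "p \<in> Vt t" by blast
        then show ?thesis using that \<open>Q = {}\<close> by blast
      qed
    next
      case False
      then obtain q where "Q = {q}" using cQ fQ
        by (metis card_0_eq card_1_singletonE le_antisym less_one not_le)
      then show ?thesis using that by (auto simp: Q_def)
    qed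
    define P where "P = Vt t - {p}"
    have PL: "P \<subseteq> L" using psubset.prems(1) t by (auto simp: P_def)
    have POw: "P \<inter> (Ot \<union> {w}) = {}" using pQ by (auto simp: Q_def P_def)
    define R where "R x = of_real (\<Prod>s\<in>S-{t}. F s x) * h x" for x
    have Rdep: "dep_only N L (L - P) R"
      unfolding dep_only_def
    proof (intro ballI impI)
      fix x y assume x: "x \<in> ZNdom N L" and y: "y \<in> ZNdom N L" and xy: "\<forall>v\<in>L - P. x v = y v"
      have "F s x = F s y" if s: "s \<in> S - {t}" for s
      proof -
        have "Vt s \<subseteq> L - P" using psubset.prems(1) s POw by (auto simp: Ot_def)
        then show ?thesis using psubset.prems(2) s x y xy unfolding dep_only_def by blast
      qed
      hence "(\<Prod>s\<in>S-{t}. F s x) = (\<Prod>s\<in>S-{t}. F s y)" by (intro prod.cong) auto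
      moreover have "h x = h y"
      proof -
        have "L - (\<Union>(Vt ` S) - {w}) \<subseteq> L - P" using t POw by (auto simp: P_def)
        then show ?thesis using psubset.prems(5) x y xy unfolding dep_only_def by blast
      qed
      ultimately show "R x = R y" by (simp add: R_def)
    qed
    have "(\<Sum>x\<in>ZNdom N L. of_real (\<Prod>t\<in>S. F t x) * h x)
        = (\<Sum>x\<in>ZNdom N L. of_real (F t x) * R x)"
      using t psubset.hyps(1) by (intro sum.cong) (auto simp: R_def prod.remove)
    also have "\<dots> = (\<Sum>x\<in>ZNdom N L. R x)"
    proof (rule peel_step[OF L PL N _ Rdep])
      show "marg N L P (F t)" using psubset.prems(3) t p unfolding P_def by blast
    qed
    also have "\<dots> = (\<Sum>x\<in>ZNdom N L. h x)"
      unfolding R_def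
    proof (rule psubset.IH)
      show "S - {t} \<subset> S" using t by blast
      show "\<forall>t\<in>S - {t}. Vt t \<subseteq> L" using psubset.prems(1) by blast
      show "\<forall>t\<in>S - {t}. dep_only N L (Vt t) (F t)" using psubset.prems(2) by blast
      show "\<forall>t\<in>S - {t}. \<forall>p. p \<in> Vt t \<or> Vt t = {} \<longrightarrow> marg N L (Vt t - {p}) (F t)"
        using psubset.prems(3) by blast
      show "\<forall>S'\<subseteq>S - {t}. S' \<noteq> {} \<longrightarrow> (\<exists>t\<in>S'. card (Vt t \<inter> (\<Union> (Vt ` (S' - {t})) \<union> {w})) \<le> 1)"
        using psubset.prems(4) by blast
      show "dep_only N L (L - (\<Union> (Vt ` (S - {t})) - {w})) h"
        by (rule dep_only_mono[OF psubset.prems(5)]) auto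
    qed
    finally show ?thesis .
  qed
qed

lemma card_filter_sum: "finite A \<Longrightarrow> card {x\<in>A. P x} = (\<Sum>x\<in>A. if P x then 1 else 0)"
proof -
  have "{x\<in>A. P x} = A \<inter> Collect P" by auto
  thus "finite A \<Longrightarrow> ?thesis" by (simp add: sum.If_cases)
qed

lemma leaf_lemma:
  fixes HS :: "'a set set"
  assumes fin: "finite HS" and hk: "\<forall>h\<in>HS. finite h \<and> card h = k" and ne: "HS \<noteq> {}"
    and k: "k \<ge> 1"
    and nc: "card (\<Union>HS) \<ge> card HS * (k - 1) + 1"
  shows "\<exists>h\<in>HS. card (h \<inter> (\<Union>(HS - {h}) \<union> {w})) \<le> 1"
proof (rule ccontr)
  assume "\<not> ?thesis"
  hence big: "\<forall>h\<in>HS. card (h \<inter> (\<Union>(HS - {h}) \<union> {w})) \<ge> 2" by force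
  define U where "U = \<Union>HS"
  have fU: "finite U" using fin hk by (auto simp: U_def)
  define deg where "deg x = card {h\<in>HS. x \<in> h}" for x
  define ind where "ind x = (deg x \<ge> 2 \<or> x = w)" for x
  have cardh: "card h = (\<Sum>x\<in>U. if x \<in> h then 1 else 0)" if "h \<in> HS" for h
  proof -
    have "h = {x\<in>U. x \<in> h}" using that by (auto simp: U_def)
    then show ?thesis using card_filter_sum[OF fU, of "\<lambda>x. x \<in> h"] by simp
  qed
  have degsum: "(\<Sum>h\<in>HS. card h) = (\<Sum>x\<in>U. deg x)"
  proof -
    have "(\<Sum>h\<in>HS. card h) = (\<Sum>h\<in>HS. \<Sum>x\<in>U. if x \<in> h then 1 else 0)"
      using cardh by simp
    also have "\<dots> = (\<Sum>x\<in>U. \<Sum>h\<in>HS. if x \<in> h then 1 else 0)" by (rule sum.swap)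
    also have "\<dots> = (\<Sum>x\<in>U. deg x)"
      unfolding deg_def using card_filter_sum[OF fin] by simp
    finally show ?thesis .
  qed
  have sh: "h \<inter> (\<Union>(HS - {h}) \<union> {w}) = {x\<in>U. x \<in> h \<and> ind x}" if h: "h \<in> HS" for h
  proof -
    have "x \<in> \<Union>(HS - {h}) \<longleftrightarrow> deg x \<ge> 2" if "x \<in> h" for x
    proof
      assume "x \<in> \<Union>(HS - {h})"
      then obtain h' where "h' \<in> HS" "h' \<noteq> h" "x \<in> h'" by blast
      hence "{h, h'} \<subseteq> {h\<in>HS. x \<in> h}" using h that by auto
      from card_mono[OF _ this] fin have "card {h, h'} \<le> deg x" by (simp add: deg_def)
      thus "deg x \<ge> 2" using \<open>h' \<noteq> h\<close> by simp
    next
      assume d: "deg x \<ge> 2"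
      show "x \<in> \<Union>(HS - {h})"
      proof (rule ccontr)
        assume "x \<notin> \<Union>(HS - {h})"
        hence "{h\<in>HS. x \<in> h} \<subseteq> {h}" by blast
        hence "deg x \<le> 1" unfolding deg_def by (metis card.empty card_mono finite.emptyI finite_insert is_singletonI is_singleton_altdef)
        thus False using d by simp
      qed
    qed
    then show ?thesis using h by (auto simp: ind_def U_def)
  qed
  have ssum: "(\<Sum>h\<in>HS. card (h \<inter> (\<Union>(HS - {h}) \<union> {w}))) = (\<Sum>x\<in>U. if ind x then deg x else 0)"
  proof -
    have "(\<Sum>h\<in>HS. card (h \<inter> (\<Union>(HS - {h}) \<union> {w}))) = (\<Sum>h\<in>HS. \<Sum>x\<in>U. if x \<in> h \<and> ind x then 1 else 0)"
      using sh card_filter_sum[OF fU] by (intro sum.cong) auto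
    also have "\<dots> = (\<Sum>x\<in>U. \<Sum>h\<in>HS. if x \<in> h \<and> ind x then 1 else 0)" by (rule sum.swap)
    also have "\<dots> = (\<Sum>x\<in>U. if ind x then deg x else 0)"
      unfolding deg_def using card_filter_sum[OF fin] by (intro sum.cong) auto
    finally show ?thesis .
  qed
  have deg1: "deg x \<ge> 1" if xU: "x \<in> U" for x
  proof -
    obtain h where "h \<in> HS" "x \<in> h" using xU unfolding U_def by blast
    hence "{h} \<subseteq> {h\<in>HS. x \<in> h}" by auto
    from card_mono[OF _ this] fin show ?thesis by (simp add: deg_def)
  qed
  have pw: "int (if ind x then deg x else 0) \<le> 2 * (int (deg x) - 1) + (if x = w then 1 else 0)"
    if "x \<in> U" for x
    using deg1[OF that] by (auto simp: ind_def)
  have "int (\<Sum>x\<in>U. if ind x then deg x else 0) \<le> (\<Sum>x\<in>U. 2 * (int (deg x) - 1) + (if x = w then 1 else 0))"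
    unfolding of_nat_sum by (rule sum_mono) (use pw in auto)
  also have "\<dots> = 2 * (int (\<Sum>x\<in>U. deg x) - int (card U)) + (\<Sum>x\<in>U. if x = w then 1 else 0)"
    by (simp add: sum.distrib sum_subtractf sum_distrib_left of_nat_sum)
  also have "(\<Sum>x\<in>U. if x = w then 1 else (0::int)) \<le> 1"
    using fU by (cases "w \<in> U") (auto)
  also have "(\<Sum>x\<in>U. deg x) = card HS * k" using degsum hk by simp
  finally have A: "int (\<Sum>h\<in>HS. card (h \<inter> (\<Union>(HS - {h}) \<union> {w}))) \<le> 2 * (int (card HS * k) - int (card U)) + 1"
    using ssum by simp
  have B: "(\<Sum>h\<in>HS. card (h \<inter> (\<Union>(HS - {h}) \<union> {w}))) \<ge> (\<Sum>h\<in>HS. 2)"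
    by (rule sum_mono) (use big in auto)
  have C: "int (card U) \<ge> int (card HS) * (int k - 1) + 1"
  proof -
    have "int (card HS * (k - 1) + 1) \<le> int (card U)" using nc unfolding U_def by (simp only: of_nat_le_iff)
    moreover have "int (card HS * (k - 1) + 1) = int (card HS) * (int k - 1) + 1" using k by (simp add: of_nat_diff)
    ultimately show ?thesis by linarith
  qed
  define \<sigma> where "\<sigma> = (\<Sum>h\<in>HS. card (h \<inter> (\<Union>(HS - {h}) \<union> {w})))"
  have B': "int \<sigma> \<ge> 2 * int (card HS)" proof -
    have "2 * card HS \<le> \<sigma>" using B unfolding \<sigma>_def by simp
    then show ?thesis by linarith
  qed
  have A': "int \<sigma> \<le> 2 * (int (card HS) * int k - int (card U)) + 1" using A unfolding \<sigma>_def by (simp only: of_nat_mult)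
  show False using A' B' C by (simp add: algebra_simps)
qed

lemma tsub_nth: "j < length a \<Longrightarrow> j < length c \<Longrightarrow> tsub N a c ! j = (a!j + N - c!j) mod N"
  by (simp add: tsub_def)

lemma tsub_length: "length (tsub N a c) = min (length a) (length c)"
  by (simp add: tsub_def)

lemma tsub_set: "N \<ge> 1 \<Longrightarrow> set (tsub N a c) \<subseteq> {..<N}"
  by (auto simp: tsub_def)

lemma mod_aux1: "(a::nat) < N \<Longrightarrow> c < N \<Longrightarrow> ((a + N - c) mod N + c) mod N = a"
proof -
  assume a: "a < N" and c: "c < N"
  have "((a + N - c) mod N + c) mod N = ((a + N - c) + c) mod N" by (simp add: mod_add_left_eq)
  also have "(a + N - c) + c = a + N" using c by simp
  finally show ?thesis using a by simp
qed

lemma mod_aux2: "(a::nat) < N \<Longrightarrow> c < N \<Longrightarrow> ((a + c) mod N + N - c) mod N = a"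
proof -
  assume a: "a < N" and c: "c < N"
  show ?thesis
  proof (cases "a + c < N")
    case True then show ?thesis by simp
  next
    case False
    then have "(a + c) mod N = a + c - N" using a c by (simp add: mod_if)
    then show ?thesis using a c False by simp
  qed
qed

lemma marg_factor:
  fixes M :: "nat list \<Rightarrow> real" and vs :: "'a list"
  assumes N: "N \<ge> 1" and len: "length vs = k" and dist: "distinct vs" and vsL: "set vs \<subseteq> L"
    and c: "c \<in> ZNk N k"
    and Mm: "\<forall>i<k. \<forall>a<N. (\<Sum>t\<in>{t\<in>ZNk N k. t ! i = a}. M t) = 1 / real N"
    and Msum: "(\<Sum>t\<in>ZNk N k. M t) = 1"
    and p: "p \<in> set vs \<or> vs = []"
  shows "marg N L (set vs - {p}) (\<lambda>x. real N ^ k * M (tsub N (map x vs) c))"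
proof (cases "vs = []")
  case True
  hence k0: "k = 0" using len by simp
  have "ZNk N 0 = {[]}" by (auto simp: ZNk_def)
  hence "M [] = 1" using Msum k0 by simp
  show ?thesis unfolding marg_def
  proof
    fix x
    have "ZNdom N (set vs - {p}) = {\<lambda>_. undefined}" using True by (simp add: ZNdom_def)
    then show "(\<Sum>y\<in>ZNdom N (set vs - {p}). real N ^ k * M (tsub N (map (mrg (set vs - {p}) y x) vs) c)) = real N ^ card (set vs - {p})"
      using True k0 \<open>M [] = 1\<close> by (simp add: tsub_def)
  qed
next
  case False
  hence pv: "p \<in> set vs" using p by simp
  then obtain i where i: "i < k" "vs ! i = p" using len by (auto simp: in_set_conv_nth)
  define P where "P = set vs - {p}"
  have clen: "length c = k" using c by (auto simp: ZNk_def)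
  have cN: "\<forall>j<k. c ! j < N"
  proof (intro allI impI)
    fix j assume "j < k" hence "c ! j \<in> set c" using clen by simp
    thus "c ! j < N" using c by (auto simp: ZNk_def)
  qed
  define idx where "idx v = (THE j. j < k \<and> vs ! j = v)" for v
  have idx_nth: "idx (vs ! j) = j" if "j < k" for j
    unfolding idx_def using that dist len by (auto intro!: the_equality simp: nth_eq_iff_index_eq)
  have idx_P: "idx v < k \<and> vs ! idx v = v \<and> idx v \<noteq> i" if "v \<in> P" for v
  proof -
    from that obtain j where j: "j < k" "vs ! j = v" using len by (auto simp: P_def in_set_conv_nth)
    moreover have "j \<noteq> i" using j i that by (auto simp: P_def)
    ultimately show ?thesis using idx_nth by auto
  qed
  have inP: "vs ! j \<in> P \<longleftrightarrow> j \<noteq> i" if "j < k" for j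
    using that i dist len by (auto simp: P_def nth_eq_iff_index_eq)
  show ?thesis
    unfolding marg_def P_def[symmetric]
  proof
    fix x assume x: "x \<in> ZNdom N (L - P)"
    have xp: "x p < N" using x pv vsL by (auto simp: ZNdom_def P_def PiE_def Pi_def)
    define a where "a = (x p + N - c ! i) mod N"
    have aN: "a < N" using N by (simp add: a_def)
    define \<Phi> where "\<Phi> y = tsub N (map (mrg P y x) vs) c" for y
    define \<Psi> where "\<Psi> t = (\<lambda>v\<in>P. (t ! idx v + c ! idx v) mod N)" for t :: "nat list"
    have Phi_nth: "\<Phi> y ! j = ((if j = i then x p else y (vs ! j)) + N - c ! j) mod N" if "j < k" for y j
      using that len clen inP[OF that] i by (auto simp: \<Phi>_def tsub_nth mrg_def)
    have Phi_len: "length (\<Phi> y) = k" for y using len clen by (simp add: \<Phi>_def tsub_length)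
    have "(\<Sum>y\<in>ZNdom N P. M (\<Phi> y)) = (\<Sum>t\<in>{t\<in>ZNk N k. t ! i = a}. M t)"
    proof (rule sum.reindex_bij_witness[of _ \<Psi> \<Phi>])
      fix y assume y: "y \<in> ZNdom N P"
      show "\<Psi> (\<Phi> y) = y"
      proof
        fix v show "\<Psi> (\<Phi> y) v = y v"
        proof (cases "v \<in> P")
          case True
          note iv = idx_P[OF True]
          have "y v < N" using y True by (auto simp: ZNdom_def)
          have e1: "\<Phi> y ! idx v = (y v + N - c ! idx v) mod N" using Phi_nth[of "idx v" y] iv by simp
          have "\<Psi> (\<Phi> y) v = (\<Phi> y ! idx v + c ! idx v) mod N" using True by (simp add: \<Psi>_def)
          also have "\<dots> = y v" unfolding e1 by (rule mod_aux1) (use \<open>y v < N\<close> cN iv in auto)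
          finally show ?thesis .
        next
          case False then show ?thesis using y by (auto simp: \<Psi>_def ZNdom_def PiE_def extensional_def)
        qed
      qed
      show "\<Phi> y \<in> {t\<in>ZNk N k. t ! i = a}"
      proof -
        have "\<Phi> y ! i = a" using Phi_nth[of i y] i by (simp add: a_def)
        moreover have "set (\<Phi> y) \<subseteq> {..<N}" unfolding \<Phi>_def by (rule tsub_set[OF N])
        ultimately show ?thesis using Phi_len by (simp add: ZNk_def)
      qed
    next
      fix t assume t: "t \<in> {t\<in>ZNk N k. t ! i = a}"
      have tl: "length t = k" and ti: "t ! i = a"
        using t by (auto simp: ZNk_def)
      have tN: "\<forall>j<k. t ! j < N"
      proof (intro allI impI)
        fix j assume "j < k" hence "t ! j \<in> set t" using tl by simp
        thus "t ! j < N" using t by (auto simp: ZNk_def)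
      qed
      show "\<Phi> (\<Psi> t) = t"
      proof (rule nth_equalityI)
        show "length (\<Phi> (\<Psi> t)) = length t" using Phi_len tl by simp
        fix j assume "j < length (\<Phi> (\<Psi> t))"
        hence j: "j < k" using Phi_len by simp
        show "\<Phi> (\<Psi> t) ! j = t ! j"
        proof (cases "j = i")
          case True
          have "\<Phi> (\<Psi> t) ! j = (x p + N - c ! i) mod N" using Phi_nth[OF j, of "\<Psi> t"] True by simp
          then show ?thesis using ti True by (simp add: a_def)
        next
          case False
          hence "vs ! j \<in> P" using inP j by simp
          have "\<Phi> (\<Psi> t) ! j = (\<Psi> t (vs ! j) + N - c ! j) mod N" using Phi_nth[OF j, of "\<Psi> t"] False by simp
          also have "\<Psi> t (vs ! j) = (t ! j + c ! j) mod N" using \<open>vs ! j \<in> P\<close> idx_nth[OF j] by (simp add: \<Psi>_def)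
          also have "((t ! j + c ! j) mod N + N - c ! j) mod N = t ! j" by (rule mod_aux2) (use tN cN j in auto)
          finally show ?thesis .
        qed
      qed
      show "\<Psi> t \<in> ZNdom N P" using N by (auto simp: \<Psi>_def ZNdom_def)
    qed simp
    also have "\<dots> = 1 / real N" using Mm i aN by simp
    finally have "(\<Sum>y\<in>ZNdom N P. M (\<Phi> y)) = 1 / real N" .
    moreover have "card P = k - 1" using dist len pv by (simp add: P_def distinct_card)
    ultimately show "(\<Sum>y\<in>ZNdom N P. real N ^ k * M (tsub N (map (mrg P y x) vs) c)) = real N ^ card P"
    proof -
      have kk: "real N ^ k = real N * real N ^ (k - 1)" using i by (metis Suc_pred' not_less0 gr0I power_Suc)
      have "(\<Sum>y\<in>ZNdom N P. real N ^ k * M (tsub N (map (mrg P y x) vs) c)) = real N ^ k * (\<Sum>y\<in>ZNdom N P. M (\<Phi> y))"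
        by (simp add: \<Phi>_def sum_distrib_left)
      also have "\<dots> = real N ^ (k - 1)" using \<open>(\<Sum>y\<in>ZNdom N P. M (\<Phi> y)) = 1 / real N\<close> kk N by simp
      finally show ?thesis using \<open>card P = k - 1\<close> by simp
    qed
  qed
qed

definition Tr :: "'e set \<Rightarrow> nat \<Rightarrow> ('e \<Rightarrow> nat \<Rightarrow> nat list \<Rightarrow> nat list option) \<Rightarrow> ('e \<times> nat \<times> nat list) set" where
  "Tr EI K z = Sigma EI (\<lambda>e. Sigma {..<K} (\<lambda>j. supp z e j))"

definition vl :: "('e \<Rightarrow> 'v list) \<Rightarrow> 'e \<times> nat \<times> nat list \<Rightarrow> ('v \<times> nat) list" where
  "vl ev t = zip (ev (fst t)) (snd (snd t))"

definition Ff :: "nat \<Rightarrow> nat \<Rightarrow> ('e \<Rightarrow> 'v list) \<Rightarrow> ('e \<Rightarrow> nat list \<Rightarrow> real)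
   \<Rightarrow> ('e \<Rightarrow> nat \<Rightarrow> nat list \<Rightarrow> nat list option) \<Rightarrow> 'e \<times> nat \<times> nat list \<Rightarrow> ('v \<times> nat \<Rightarrow> nat) \<Rightarrow> real" where
  "Ff N k ev mu z t x = real N ^ k * mu (fst t) (tsub N (map x (vl ev t)) (the (z (fst t) (fst (snd t)) (snd (snd t)))))"

lemma Tr_iff: "(e, j, is) \<in> Tr EI K z \<longleftrightarrow> e \<in> EI \<and> j < K \<and> is \<in> supp z e j"
  by (simp add: Tr_def)

lemma finite_supp:
  assumes rs: "restr_seq N k EI ev n \<alpha> K z" and e: "e \<in> EI" and j: "j < K"
  shows "finite (supp z e j)"
proof -
  have "supp z e j \<subseteq> Ue k n" using rs e j unfolding restr_seq_def supp_def by auto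
  moreover have "finite (Ue k n)"
  proof -
    have "Ue k n \<subseteq> {xs. set xs \<subseteq> {..<n} \<and> length xs = k}" by (auto simp: Ue_def)
    thus ?thesis using finite_lists_length_eq[of "{..<n}" k] finite_subset by blast
  qed
  ultimately show ?thesis using finite_subset by blast
qed

lemma finite_Tr:
  assumes "finite EI" "restr_seq N k EI ev n \<alpha> K z"
  shows "finite (Tr EI K z)"
  unfolding Tr_def using assms finite_supp by (intro finite_SigmaI) auto

lemma gz_Tr:
  assumes "finite EI" "restr_seq N k EI ev n \<alpha> K z"
  shows "gz N k EI ev mu K z x = (\<Prod>t\<in>Tr EI K z. Ff N k ev mu z t x)"
proof -
  have "gz N k EI ev mu K z x = (\<Prod>e\<in>EI. \<Prod>(j,is)\<in>Sigma {..<K} (supp z e). real N ^ k * mu e (tsub N (map x (zip (ev e) is)) (the (z e j is))))"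
    unfolding gz_def using assms finite_supp
    by (intro prod.cong refl, subst prod.Sigma) auto
  also have "\<dots> = (\<Prod>(e,j,is)\<in>Tr EI K z. real N ^ k * mu e (tsub N (map x (zip (ev e) is)) (the (z e j is))))"
    unfolding Tr_def using assms finite_supp
    by (subst prod.Sigma) (auto intro!: finite_SigmaI simp: split_def)
  also have "\<dots> = (\<Prod>t\<in>Tr EI K z. Ff N k ev mu z t x)"
    by (intro prod.cong refl) (auto simp: Ff_def vl_def)
  finally show ?thesis .
qed

lemma edge_facts:
  assumes dl: "dlk_graph N k V EI ev mu" and rs: "restr_seq N k EI ev n \<alpha> K z"
    and t: "t \<in> Tr EI K z"
  shows "length (vl ev t) = k" "distinct (vl ev t)" "set (vl ev t) \<subseteq> V \<times> {..<n}"
    "the (z (fst t) (fst (snd t)) (snd (snd t))) \<in> ZNk N k" "fst t \<in> EI"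
    "set (vl ev t) = hedge ev (fst t) (snd (snd t))"
proof -
  obtain e j ix where tt: "t = (e, j, ix)" by (cases t) auto
  have e: "e \<in> EI" and j: "j < K" and ix: "ix \<in> supp z e j" using t tt by (auto simp: Tr_iff)
  then obtain c where zc: "z e j ix = Some c" by (auto simp: supp_def)
  have isU: "ix \<in> Ue k n" and c: "c \<in> ZNk N k" using rs e j zc unfolding restr_seq_def by blast+
  have ev: "length (ev e) = k" "distinct (ev e)" "set (ev e) \<subseteq> V" using dl e unfolding dlk_graph_def by blast+
  have isl: "length ix = k" "set ix \<subseteq> {..<n}" using isU by (auto simp: Ue_def)
  show "length (vl ev t) = k" using ev isl by (simp add: vl_def tt)
  show "distinct (vl ev t)" using ev by (simp add: vl_def tt distinct_zipI1)
  show "set (vl ev t) \<subseteq> V \<times> {..<n}"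
    using ev isl by (auto simp: vl_def tt dest: set_zip_leftD set_zip_rightD)
  show "the (z (fst t) (fst (snd t)) (snd (snd t))) \<in> ZNk N k" using zc c by (simp add: tt)
  show "fst t \<in> EI" using e tt by simp
  show "set (vl ev t) = hedge ev (fst t) (snd (snd t))" by (simp add: vl_def hedge_def)
qed

lemma Ff_dep:
  "dep_only N L (set (vl ev t)) (Ff N k ev mu z t)"
  unfolding dep_only_def Ff_def
proof (intro ballI impI)
  fix x y :: "'a \<times> nat \<Rightarrow> nat" assume "\<forall>v\<in>set (vl ev t). x v = y v"
  hence me: "map x (vl ev t) = map y (vl ev t)" by simp
  show "real N ^ k * mu (fst t) (tsub N (map x (vl ev t)) (the (z (fst t) (fst (snd t)) (snd (snd t))))) =
        real N ^ k * mu (fst t) (tsub N (map y (vl ev t)) (the (z (fst t) (fst (snd t)) (snd (snd t)))))"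
    by (simp only: me)
qed

lemma tsub_ZNk:
  assumes "N \<ge> 1" "length a = k" "c \<in> ZNk N k"
  shows "tsub N a c \<in> ZNk N k"
  using assms tsub_set[OF assms(1)] by (auto simp: ZNk_def tsub_length)

lemma Ff_nonneg:
  assumes N: "N \<ge> 1" and dl: "dlk_graph N k V EI ev mu" and rs: "restr_seq N k EI ev n \<alpha> K z"
    and t: "t \<in> Tr EI K z"
  shows "Ff N k ev mu z t x \<ge> 0"
proof -
  have "tsub N (map x (vl ev t)) (the (z (fst t) (fst (snd t)) (snd (snd t)))) \<in> ZNk N k"
    using edge_facts[OF dl rs t] by (intro tsub_ZNk[OF N]) auto
  moreover have "fst t \<in> EI" using edge_facts[OF dl rs t] by simp
  ultimately show ?thesis using dl unfolding Ff_def dlk_graph_def by simp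
qed

lemma mu_le:
  assumes N: "N \<ge> 1" and dl: "dlk_graph N k V EI ev mu" and e: "e \<in> EI" and s: "s \<in> ZNk N k" and k: "k \<ge> 1"
  shows "mu e s \<le> 1 / real N"
proof -
  have nn: "\<forall>t\<in>ZNk N k. mu e t \<ge> 0" and mm: "\<forall>i<k. \<forall>a<N. (\<Sum>t\<in>{t\<in>ZNk N k. t ! i = a}. mu e t) = 1 / real N"
    using dl e unfolding dlk_graph_def by blast+
  have fin: "finite (ZNk N k)"
  proof -
    have "ZNk N k \<subseteq> {xs. set xs \<subseteq> {..<N} \<and> length xs = k}" by (auto simp: ZNk_def)
    thus ?thesis using finite_lists_length_eq[of "{..<N}" k] finite_subset by blast
  qed
  have "s ! 0 \<in> set s" using s k by (auto simp: ZNk_def)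
  hence s0: "s ! 0 < N" using s by (auto simp: ZNk_def)
  have "mu e s \<le> (\<Sum>t\<in>{t\<in>ZNk N k. t ! 0 = s ! 0}. mu e t)"
    using s nn fin by (intro member_le_sum) auto
  also have "\<dots> = 1 / real N" using mm k s0 by simp
  finally show ?thesis .
qed

lemma Ff_le:
  assumes N: "N \<ge> 1" and dl: "dlk_graph N k V EI ev mu" and rs: "restr_seq N k EI ev n \<alpha> K z"
    and t: "t \<in> Tr EI K z"
  shows "Ff N k ev mu z t x \<le> real N ^ (k - 1)"
proof (cases "k = 0")
  case True
  have "ZNk N 0 = {[]}" by (auto simp: ZNk_def)
  hence "mu (fst t) [] = 1" using dl edge_facts(5)[OF dl rs t] True unfolding dlk_graph_def by auto
  moreover have "length (vl ev t) = 0" using edge_facts(1)[OF dl rs t] True by simp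
  ultimately show ?thesis using True by (simp add: Ff_def tsub_def)
next
  case False
  have "tsub N (map x (vl ev t)) (the (z (fst t) (fst (snd t)) (snd (snd t)))) \<in> ZNk N k"
    using edge_facts[OF dl rs t] by (intro tsub_ZNk[OF N]) auto
  hence "mu (fst t) (tsub N (map x (vl ev t)) (the (z (fst t) (fst (snd t)) (snd (snd t))))) \<le> 1 / real N"
    using mu_le[OF N dl edge_facts(5)[OF dl rs t]] False by simp
  hence "Ff N k ev mu z t x \<le> real N ^ k * (1 / real N)"
    unfolding Ff_def by (intro mult_left_mono) auto
  also have "\<dots> = real N ^ (k - 1)" using False N by (simp add: power_eq_if)
  finally show ?thesis .
qed

lemma Ff_marg:
  assumes N: "N \<ge> 1" and dl: "dlk_graph N k V EI ev mu" and rs: "restr_seq N k EI ev n \<alpha> K z"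
    and t: "t \<in> Tr EI K z" and p: "p \<in> set (vl ev t) \<or> set (vl ev t) = {}"
  shows "marg N (V \<times> {..<n}) (set (vl ev t) - {p}) (Ff N k ev mu z t)"
proof -
  note ef = edge_facts[OF dl rs t]
  have e: "fst t \<in> EI" using ef(5) .
  have Mm: "\<forall>i<k. \<forall>a<N. (\<Sum>s\<in>{s\<in>ZNk N k. s ! i = a}. mu (fst t) s) = 1 / real N"
    using dl e unfolding dlk_graph_def by blast
  have Ms: "(\<Sum>s\<in>ZNk N k. mu (fst t) s) = 1" using dl e unfolding dlk_graph_def by blast
  have p': "p \<in> set (vl ev t) \<or> vl ev t = []" using p by auto
  have eq: "Ff N k ev mu z t = (\<lambda>x. real N ^ k * mu (fst t) (tsub N (map x (vl ev t)) (the (z (fst t) (fst (snd t)) (snd (snd t))))))"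
    by (simp add: fun_eq_iff Ff_def)
  show ?thesis unfolding eq by (rule marg_factor[OF N ef(1) ef(2) ef(3) ef(4) Mm Ms p'])
qed

lemma card_vl:
  assumes dl: "dlk_graph N k V EI ev mu" and rs: "restr_seq N k EI ev n \<alpha> K z" and t: "t \<in> Tr EI K z"
  shows "card (set (vl ev t)) = k"
  using edge_facts(1,2)[OF dl rs t] distinct_card by metis

lemma vl_inj:
  assumes dl: "dlk_graph N k V EI ev mu" and rs: "restr_seq N k EI ev n \<alpha> K z"
    and nc: "\<not> cyclic k EI ev K z" and k: "k \<ge> 1"
    and t1: "t1 \<in> Tr EI K z" and t2: "t2 \<in> Tr EI K z"
    and eq: "set (vl ev t1) = set (vl ev t2)"
  shows "t1 = t2"
proof -
  obtain e1 j1 i1 where tt1: "t1 = (e1, j1, i1)" by (cases t1) auto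
  obtain e2 j2 i2 where tt2: "t2 = (e2, j2, i2)" by (cases t2) auto
  have a1: "e1 \<in> EI" "j1 < K" "i1 \<in> supp z e1 j1" using t1 tt1 by (auto simp: Tr_iff)
  have a2: "e2 \<in> EI" "j2 < K" "i2 \<in> supp z e2 j2" using t2 tt2 by (auto simp: Tr_iff)
  have h: "hedge ev e1 i1 = hedge ev e2 i2"
    using eq edge_facts(6)[OF dl rs t1] edge_facts(6)[OF dl rs t2] tt1 tt2 by simp
  have ej: "(e1, j1) = (e2, j2)"
  proof (rule ccontr)
    assume "(e1, j1) \<noteq> (e2, j2)"
    hence "cyclic k EI ev K z" unfolding cyclic_def using a1 a2 h by blast
    thus False using nc by simp
  qed
  show ?thesis
  proof (rule ccontr)
    assume "t1 \<noteq> t2"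
    hence "i1 \<noteq> i2" using ej tt1 tt2 by auto
    hence "hedge ev e1 i1 \<inter> hedge ev e1 i2 = {}"
      using rs a1 a2 ej unfolding restr_seq_def by auto
    hence "set (vl ev t1) = {}" using h ej edge_facts(6)[OF dl rs t1] tt1 by auto
    hence "card (set (vl ev t1)) = 0" by simp
    thus False using card_vl[OF dl rs t1] k by simp
  qed
qed

lemma Hedges_eq: "Hedges EI ev K z = (\<lambda>t. set (vl ev t)) ` Tr EI K z"
  by (auto simp: Hedges_def Tr_def vl_def hedge_def image_def)

lemma Tr_leaf:
  assumes dl: "dlk_graph N k V EI ev mu" and rs: "restr_seq N k EI ev n \<alpha> K z"
    and nc: "\<not> cyclic k EI ev K z"
  shows "\<forall>S'\<subseteq>Tr EI K z. S' \<noteq> {} \<longrightarrow>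
           (\<exists>t\<in>S'. card (set (vl ev t) \<inter> (\<Union>((\<lambda>t. set (vl ev t)) ` (S' - {t})) \<union> {w})) \<le> 1)"
proof (intro allI impI)
  fix S' assume S': "S' \<subseteq> Tr EI K z" and ne: "S' \<noteq> {}"
  have fEI: "finite EI" using dl by (simp add: dlk_graph_def)
  have fS: "finite S'" using finite_subset[OF S' finite_Tr[OF fEI rs]] .
  show "\<exists>t\<in>S'. card (set (vl ev t) \<inter> (\<Union>((\<lambda>t. set (vl ev t)) ` (S' - {t})) \<union> {w})) \<le> 1"
  proof (cases "k = 0")
    case True
    then obtain t where "t \<in> S'" using ne by blast
    moreover have "set (vl ev t) = {}"
    proof -
      have "t \<in> Tr EI K z" using S' \<open>t \<in> S'\<close> by blast
      from edge_facts(1)[OF dl rs this] True show ?thesis by simp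
    qed
    ultimately show ?thesis by (intro bexI[of _ t]) auto
  next
    case False
    hence k: "k \<ge> 1" by simp
    define HS where "HS = (\<lambda>t. set (vl ev t)) ` S'"
    have HSsub: "HS \<subseteq> Hedges EI ev K z" using S' by (auto simp: HS_def Hedges_eq)
    have nc2: "\<not> (real (card (\<Union>HS)) \<le> real (card HS) * (real k - 1))"
    proof
      assume "real (card (\<Union>HS)) \<le> real (card HS) * (real k - 1)"
      moreover have "finite HS" "HS \<noteq> {}" using fS ne by (auto simp: HS_def)
      ultimately have "cyclic k EI ev K z" unfolding cyclic_def using HSsub by (intro disjI2 exI[of _ HS]) auto
      thus False using nc by simp
    qed
    have "card (\<Union>HS) \<ge> card HS * (k - 1) + 1"
    proof -
      have "real (card HS * (k - 1)) = real (card HS) * (real k - 1)" using k by (simp add: of_nat_diff)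
      hence "real (card HS * (k - 1)) < real (card (\<Union>HS))" using nc2 by linarith
      hence "card HS * (k - 1) < card (\<Union>HS)" by (simp only: of_nat_less_iff)
      thus ?thesis by simp
    qed
    moreover have "\<forall>h\<in>HS. finite h \<and> card h = k" using card_vl[OF dl rs] S' by (auto simp: HS_def)
    ultimately obtain h where h: "h \<in> HS" and hc: "card (h \<inter> (\<Union>(HS - {h}) \<union> {w})) \<le> 1"
      using leaf_lemma[of HS k w] fS ne k by (auto simp: HS_def)
    then obtain t where t: "t \<in> S'" and ht: "h = set (vl ev t)" by (auto simp: HS_def)
    have "\<Union>(HS - {h}) = \<Union>((\<lambda>t. set (vl ev t)) ` (S' - {t}))"
    proof -
      have "HS - {h} = (\<lambda>t. set (vl ev t)) ` (S' - {t})"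
      proof
        show "HS - {h} \<subseteq> (\<lambda>t. set (vl ev t)) ` (S' - {t})" using ht by (auto simp: HS_def)
        show "(\<lambda>t. set (vl ev t)) ` (S' - {t}) \<subseteq> HS - {h}"
        proof
          fix X assume "X \<in> (\<lambda>t. set (vl ev t)) ` (S' - {t})"
          then obtain t' where t': "t' \<in> S'" "t' \<noteq> t" "X = set (vl ev t')" by auto
          have "X \<noteq> h"
          proof
            assume "X = h"
            hence "t' = t" using vl_inj[OF dl rs nc k, of t' t] S' t' t ht by auto
            thus False using t' by simp
          qed
          thus "X \<in> HS - {h}" using t' by (auto simp: HS_def)
        qed
      qed
      thus ?thesis by simp
    qed
    thus ?thesis using hc ht t by auto
  qed
qed

definition Hrel :: "('v \<times> nat) set set \<Rightarrow> (('v \<times> nat) \<times> ('v \<times> nat)) set" where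
  "Hrel HE = {(u, w). \<exists>h\<in>HE. u \<in> h \<and> w \<in> h}"

lemma Hcomp_alt: "Hcomp V n HE x = {y \<in> V \<times> {..<n}. (x, y) \<in> (Hrel HE)\<^sup>*}"
  by (simp add: Hcomp_def Hrel_def)

lemma sym_Hrel: "sym (Hrel HE)"
  by (auto simp: sym_def Hrel_def)

lemma Hcomp_refl: "x \<in> V \<times> {..<n} \<Longrightarrow> x \<in> Hcomp V n HE x"
  by (simp add: Hcomp_alt)

lemma Hcomp_sub: "Hcomp V n HE x \<subseteq> V \<times> {..<n}"
  by (auto simp: Hcomp_alt)

lemma Hcomp_eq:
  assumes "y \<in> Hcomp V n HE x"
  shows "Hcomp V n HE y = Hcomp V n HE x"
proof -
  have xy: "(x, y) \<in> (Hrel HE)\<^sup>*" using assms by (simp add: Hcomp_alt)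
  have yx: "(y, x) \<in> (Hrel HE)\<^sup>*" using xy sym_rtrancl[OF sym_Hrel[of HE]] unfolding sym_def by blast
  show ?thesis unfolding Hcomp_alt using xy yx by (auto intro: rtrancl_trans)
qed

lemma Hcomp_disj:
  assumes "Hcomp V n HE x \<inter> Hcomp V n HE y \<noteq> {}"
  shows "Hcomp V n HE x = Hcomp V n HE y"
proof -
  obtain u where "u \<in> Hcomp V n HE x" "u \<in> Hcomp V n HE y" using assms by blast
  thus ?thesis using Hcomp_eq by metis
qed

lemma Hcomp_closed:
  assumes hE: "h \<in> HE" and hL: "h \<subseteq> V \<times> {..<n}" and int: "h \<inter> Hcomp V n HE x \<noteq> {}"
  shows "h \<subseteq> Hcomp V n HE x"
proof
  fix v assume v: "v \<in> h"
  obtain u where u: "u \<in> h" "u \<in> Hcomp V n HE x" using int by blast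
  have "(u, v) \<in> Hrel HE" using hE u v by (auto simp: Hrel_def)
  hence "(x, v) \<in> (Hrel HE)\<^sup>*" using u by (auto simp: Hcomp_alt intro: rtrancl_into_rtrancl)
  thus "v \<in> Hcomp V n HE x" using v hL by (auto simp: Hcomp_alt)
qed

locale setting =
  fixes N k :: nat and V :: "'v set" and EI :: "'e set" and ev :: "'e \<Rightarrow> 'v list"
    and mu :: "'e \<Rightarrow> nat list \<Rightarrow> real" and n :: nat and \<alpha> :: real and K :: nat
    and z :: "'e \<Rightarrow> nat \<Rightarrow> nat list \<Rightarrow> nat list option"
  assumes N2: "N \<ge> 2" and dl: "dlk_graph N k V EI ev mu" and rs: "restr_seq N k EI ev n \<alpha> K z"
    and nc: "\<not> cyclic k EI ev K z"
begin

abbreviation "L \<equiv> V \<times> {..<n}"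
abbreviation "T \<equiv> Tr EI K z"
abbreviation "F \<equiv> Ff N k ev mu z"
abbreviation "Vt \<equiv> (\<lambda>t. set (vl ev t))"
abbreviation "g \<equiv> gz N k EI ev mu K z"
abbreviation "HE \<equiv> Hedges EI ev K z"
abbreviation "Cm \<equiv> Hcomp V n HE"

lemma N1: "N \<ge> 1" using N2 by simp
lemma fEI: "finite EI" using dl by (simp add: dlk_graph_def)
lemma fV: "finite V" using dl by (simp add: dlk_graph_def)
lemma fL: "finite L" using fV by simp
lemma fT: "finite T" using finite_Tr[OF fEI rs] .
lemma g_eq: "g x = (\<Prod>t\<in>T. F t x)" using gz_Tr[OF fEI rs] .
lemma VtL: "t \<in> T \<Longrightarrow> Vt t \<subseteq> L" using edge_facts(3)[OF dl rs] .

lemma g_nonneg: "g x \<ge> 0"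
  unfolding g_eq by (rule prod_nonneg) (use Ff_nonneg[OF N1 dl rs] in auto)

lemma peel_g:
  fixes h :: "('v \<times> nat \<Rightarrow> nat) \<Rightarrow> complex"
  assumes S: "S \<subseteq> T" and h: "dep_only N L (L - (\<Union>(Vt ` S) - {w})) h"
  shows "(\<Sum>x\<in>ZNdom N L. of_real (\<Prod>t\<in>S. F t x) * h x) = (\<Sum>x\<in>ZNdom N L. h x)"
proof (rule peel[OF fL N1 finite_subset[OF S fT]])
  show "\<forall>t\<in>S. Vt t \<subseteq> L" using S VtL by blast
  show "\<forall>t\<in>S. dep_only N L (Vt t) (F t)" using Ff_dep by blast
  show "\<forall>t\<in>S. \<forall>p. p \<in> Vt t \<or> Vt t = {} \<longrightarrow> marg N L (Vt t - {p}) (F t)"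
    using Ff_marg[OF N1 dl rs] S by blast
  show "\<forall>S'\<subseteq>S. S' \<noteq> {} \<longrightarrow> (\<exists>t\<in>S'. card (Vt t \<inter> (\<Union> (Vt ` (S' - {t})) \<union> {w})) \<le> 1)"
    using Tr_leaf[OF dl rs nc, of w] S by blast
  show "dep_only N L (L - (\<Union> (Vt ` S) - {w})) h" by (rule h)
qed

lemma sum_g: "(\<Sum>x\<in>ZNdom N L. g x) = real N ^ card L"
proof -
  have "(\<Sum>x\<in>ZNdom N L. of_real (\<Prod>t\<in>T. F t x) * (1::complex)) = (\<Sum>x\<in>ZNdom N L. 1)"
    by (rule peel_g[of T undefined]) (auto simp: dep_only_def)
  hence "complex_of_real (\<Sum>x\<in>ZNdom N L. g x) = of_nat (card (ZNdom N L))"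
    by (simp add: g_eq)
  hence "(\<Sum>x\<in>ZNdom N L. g x) = real (card (ZNdom N L))"
    by (metis of_real_eq_iff of_real_of_nat_eq)
  thus ?thesis using card_ZNdom[OF fL] by simp
qed

lemma expect_g: "expect N L g = 1"
  unfolding expect_def sum_g card_ZNdom[OF fL] using N1 by simp

lemma norm_chi: "cmod (chi N L b x) = 1"
  unfolding chi_def by (simp add: norm_exp_eq_Re)

lemma fhat_le1: "cmod (fhat N L g b) \<le> 1"
proof -
  have "cmod (\<Sum>x\<in>ZNdom N L. of_real (g x) * cnj (chi N L b x)) \<le> (\<Sum>x\<in>ZNdom N L. cmod (of_real (g x) * cnj (chi N L b x)))"
    by (rule norm_sum)
  also have "\<dots> = (\<Sum>x\<in>ZNdom N L. g x)"
    using g_nonneg by (intro sum.cong) (auto simp: norm_mult norm_chi)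
  also have "\<dots> = real (card (ZNdom N L))" using sum_g card_ZNdom[OF fL] by simp
  finally show ?thesis
    unfolding fhat_def using N1 by (simp add: norm_divide divide_le_eq card_ZNdom[OF fL] norm_power)
qed

end

lemma rou_sum:
  fixes b N :: nat
  assumes b0: "0 < b" and bN: "b < N"
  shows "(\<Sum>a<N. exp (cnj (2 * of_real pi * \<i> / of_nat N) * of_nat b) ^ a) = 0"
proof -
  have N0: "N > 0" using bN by simp
  define zq where "zq = - (2 * of_real pi * \<i> * of_nat b / of_nat N :: complex)"
  have qz: "cnj (2 * of_real pi * \<i> / of_nat N) * of_nat b = zq"
    by (simp add: zq_def)
  define q where "q = exp zq"
  have qN: "q ^ N = 1"
  proof -
    have "q ^ N = exp (of_nat N * zq)" by (simp add: q_def exp_of_nat_mult)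
    also have "of_nat N * zq = of_nat b * (- (2 * of_real pi * \<i>))" using N0 by (simp add: zq_def field_simps)
    also have "exp \<dots> = exp (- (2 * of_real pi * \<i>)) ^ b" by (rule exp_of_nat_mult)
    also have "exp (- (2 * of_real pi * \<i>)) = 1" by (simp add: exp_minus)
    finally show ?thesis by simp
  qed
  have q1: "q \<noteq> 1"
  proof
    assume "q = 1"
    then obtain m :: int where m: "Im zq = of_int (2 * m) * pi" unfolding q_def exp_eq_1 by blast
    have "Im zq = - (2 * pi * real b / real N)" by (simp add: zq_def)
    hence "- (2 * pi * real b / real N) = 2 * real_of_int m * pi" using m by simp
    hence "(2 * pi) * (- (real b / real N)) = (2 * pi) * real_of_int m" by (simp add: algebra_simps)
    hence "- (real b / real N) = real_of_int m" using pi_gt_zero by (simp only: mult_left_cancel)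
    hence "- real b = real_of_int m * real N" using N0 by (simp add: field_simps)
    hence "- int b = m * int N" by (metis of_int_eq_iff of_int_minus of_int_mult of_int_of_nat_eq)
    moreover have "0 < int b" "int b < int N" using b0 bN by auto
    ultimately show False
    proof (cases "m \<ge> 0")
      case True
      hence "m * int N \<ge> 0" by simp
      thus False using \<open>- int b = m * int N\<close> \<open>0 < int b\<close> by linarith
    next
      case False
      hence "m \<le> -1" by simp
      hence "m * int N \<le> -1 * int N" by (intro mult_right_mono) auto
      thus False using \<open>- int b = m * int N\<close> \<open>int b < int N\<close> by linarith
    qed
  qed
  show ?thesis unfolding qz q_def[symmetric] using q1 qN by (simp add: sum_gp_strict)
qed

context setting begin

lemma fhat_vanish:
  assumes b: "b \<in> ZNdom N L" and w: "w \<in> L" and c1: "card {v \<in> Cm w. b v \<noteq> 0} = 1"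
  shows "fhat N L g b = 0"
proof -
  define C where "C = Cm w"
  obtain w' where w': "{v \<in> C. b v \<noteq> 0} = {w'}" using c1 unfolding C_def by (metis card_1_singletonE)
  have w'C: "w' \<in> C" and bw0: "b w' \<noteq> 0" using w' by auto
  have CL: "C \<subseteq> L" unfolding C_def by (rule Hcomp_sub)
  have w'L: "w' \<in> L" using w'C CL by blast
  have bwN: "b w' < N" using b w'L by (auto simp: ZNdom_def)
  have bC: "b v = 0" if "v \<in> C" "v \<noteq> w'" for v using w' that by blast
  define SC where "SC = {t \<in> T. Vt t \<inter> C \<noteq> {}}"
  define O' where "O' = T - SC"
  have SCT: "SC \<subseteq> T" by (auto simp: SC_def)
  have SCsub: "\<Union>(Vt ` SC) \<subseteq> C"
  proof
    fix v assume "v \<in> \<Union>(Vt ` SC)"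
    then obtain t where t: "t \<in> SC" "v \<in> Vt t" by blast
    have "Vt t \<in> HE" using t SCT by (auto simp: Hedges_eq)
    moreover have "Vt t \<subseteq> L" using t SCT VtL by blast
    ultimately have "Vt t \<subseteq> C" unfolding C_def using t by (intro Hcomp_closed) (auto simp: SC_def C_def)
    thus "v \<in> C" using t by blast
  qed
  have Odisj: "Vt t \<inter> C = {}" if "t \<in> O'" for t using that by (auto simp: O'_def SC_def)
  have gsplit: "g x = (\<Prod>t\<in>SC. F t x) * (\<Prod>t\<in>O'. F t x)" for x
    unfolding g_eq O'_def using fT SCT by (subst prod.subset_diff[of SC T]) (auto simp: mult.commute)
  define \<theta> where "\<theta> = (2 * of_real pi * \<i> / of_nat N :: complex)"
  have chi_eq: "chi N L b x = exp (\<theta> * of_nat (\<Sum>v\<in>L. b v * x v))" for x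
    by (simp add: chi_def \<theta>_def)
  define h where "h x = of_real (\<Prod>t\<in>O'. F t x) * cnj (chi N L b x)" for x
  have Fdep: "F t x = F t y" if "t \<in> T" "x \<in> ZNdom N L" "y \<in> ZNdom N L" "\<forall>v\<in>Vt t. x v = y v" for t x y
    using Ff_dep[of N L ev t k mu z] that unfolding dep_only_def by blast
  have hdep: "dep_only N L (L - (\<Union>(Vt ` SC) - {w'})) h"
    unfolding dep_only_def
  proof (intro ballI impI)
    fix x y assume x: "x \<in> ZNdom N L" and y: "y \<in> ZNdom N L"
      and xy: "\<forall>v\<in>L - (\<Union>(Vt ` SC) - {w'}). x v = y v"
    have "F t x = F t y" if t: "t \<in> O'" for t
    proof (rule Fdep)
      show "t \<in> T" using t by (simp add: O'_def)
      show "\<forall>v\<in>Vt t. x v = y v" using xy Odisj[OF t] SCsub VtL[of t] \<open>t \<in> T\<close> by blast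
    qed (use x y in auto)
    hence "(\<Prod>t\<in>O'. F t x) = (\<Prod>t\<in>O'. F t y)" by (intro prod.cong) auto
    moreover have "(\<Sum>v\<in>L. b v * x v) = (\<Sum>v\<in>L. b v * y v)"
    proof (intro sum.cong refl)
      fix v assume v: "v \<in> L"
      show "b v * x v = b v * y v"
      proof (cases "v \<in> \<Union>(Vt ` SC) - {w'}")
        case True
        hence "b v = 0" using SCsub bC by blast
        thus ?thesis by simp
      next
        case False thus ?thesis using xy v by simp
      qed
    qed
    ultimately show "h x = h y" by (simp add: h_def chi_def)
  qed
  have step1: "(\<Sum>x\<in>ZNdom N L. of_real (g x) * cnj (chi N L b x)) = (\<Sum>x\<in>ZNdom N L. h x)"
  proof -
    have "(\<Sum>x\<in>ZNdom N L. of_real (g x) * cnj (chi N L b x))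
        = (\<Sum>x\<in>ZNdom N L. of_real (\<Prod>t\<in>SC. F t x) * h x)"
      by (intro sum.cong refl) (simp add: gsplit h_def)
    also have "\<dots> = (\<Sum>x\<in>ZNdom N L. h x)" by (rule peel_g[OF SCT hdep])
    finally show ?thesis .
  qed
  have step2: "(\<Sum>x\<in>ZNdom N L. h x) = 0"
  proof -
    have PL: "{w'} \<subseteq> L" using w'L by simp
    have inner: "(\<Sum>y\<in>ZNdom N {w'}. h (mrg {w'} y x)) = 0" if x: "x \<in> ZNdom N (L - {w'})" for x
    proof -
      define y0 where "y0 = (\<lambda>v\<in>{w'}. (0::nat))"
      have y0: "y0 \<in> ZNdom N {w'}" using N1 by (auto simp: y0_def ZNdom_def)
      define G where "G = (\<Prod>t\<in>O'. F t (mrg {w'} y0 x))"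
      define R where "R = (\<Sum>v\<in>L - {w'}. b v * x v)"
      define q where "q = exp (cnj \<theta> * of_nat (b w'))"
      have hy: "h (mrg {w'} y x) = of_real G * exp (cnj \<theta> * of_nat R) * q ^ (y w')"
        if y: "y \<in> ZNdom N {w'}" for y
      proof -
        have m1: "mrg {w'} y x \<in> ZNdom N L" by (rule mrg_in[OF x y PL])
        have m0: "mrg {w'} y0 x \<in> ZNdom N L" by (rule mrg_in[OF x y0 PL])
        have "F t (mrg {w'} y x) = F t (mrg {w'} y0 x)" if t: "t \<in> O'" for t
        proof (rule Fdep[OF _ m1 m0])
          show "t \<in> T" using t by (simp add: O'_def)
          have "w' \<notin> Vt t" using Odisj[OF t] w'C by blast
          thus "\<forall>v\<in>Vt t. mrg {w'} y x v = mrg {w'} y0 x v" by (auto simp: mrg_def)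
        qed
        hence G: "(\<Prod>t\<in>O'. F t (mrg {w'} y x)) = G" unfolding G_def by (intro prod.cong) auto
        have "(\<Sum>v\<in>L. b v * mrg {w'} y x v) = b w' * y w' + (\<Sum>v\<in>L - {w'}. b v * mrg {w'} y x v)"
          using fL w'L by (simp add: sum.remove mrg_def)
        also have "(\<Sum>v\<in>L - {w'}. b v * mrg {w'} y x v) = R"
          unfolding R_def by (intro sum.cong) (auto simp: mrg_def)
        finally have S: "(\<Sum>v\<in>L. b v * mrg {w'} y x v) = b w' * y w' + R" .
        have "cnj (chi N L b (mrg {w'} y x)) = exp (cnj \<theta> * of_nat (b w' * y w' + R))"
          unfolding chi_eq S by (simp add: exp_cnj)
        also have "\<dots> = exp (cnj \<theta> * of_nat R) * q ^ (y w')"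
        proof -
          have "cnj \<theta> * of_nat (b w' * y w' + R) = of_nat (y w') * (cnj \<theta> * of_nat (b w')) + cnj \<theta> * of_nat R"
            by (simp add: algebra_simps)
          thus ?thesis by (simp add: exp_add exp_of_nat_mult q_def mult.commute)
        qed
        finally show ?thesis by (simp add: h_def G)
      qed
      have "(\<Sum>y\<in>ZNdom N {w'}. h (mrg {w'} y x)) = of_real G * exp (cnj \<theta> * of_nat R) * (\<Sum>y\<in>ZNdom N {w'}. q ^ (y w'))"
        by (simp add: hy sum_distrib_left)
      also have "(\<Sum>y\<in>ZNdom N {w'}. q ^ (y w')) = (\<Sum>a<N. q ^ a)"
        by (rule sum.reindex_bij_witness[of _ "\<lambda>a. (\<lambda>v\<in>{w'}. a)" "\<lambda>y. y w'"])
           (auto simp: ZNdom_def PiE_def extensional_def fun_eq_iff)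
      also have "(\<Sum>a<N. q ^ a) = 0" unfolding q_def \<theta>_def by (rule rou_sum) (use bw0 bwN in auto)
      finally show ?thesis by simp
    qed
    show ?thesis by (subst sum_ZNdom_split[OF PL]) (simp add: inner)
  qed
  show ?thesis unfolding fhat_def step1 step2 by simp
qed

end

definition nzc :: "'a set \<Rightarrow> ('a \<Rightarrow> nat) \<Rightarrow> nat" where
  "nzc C b = card {v \<in> C. b v \<noteq> 0}"

lemma class_prod:
  fixes R :: real and CC :: "'a set set"
  assumes fin: "finite CC" and finC: "\<forall>C\<in>CC. finite C"
    and disj: "\<forall>C\<in>CC. \<forall>C'\<in>CC. C \<noteq> C' \<longrightarrow> C \<inter> C' = {}"
  shows "(\<Sum>b\<in>{b\<in>ZNdom N (\<Union>CC). \<forall>C\<in>CC. nzc C b \<noteq> 1}. R ^ nzc (\<Union>CC) b)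
       = (\<Prod>C\<in>CC. \<Sum>b\<in>{b\<in>ZNdom N C. nzc C b \<noteq> 1}. R ^ nzc C b)"
  using fin finC disj
proof (induction CC rule: finite_induct)
  case empty
  have e: "{b\<in>ZNdom N (\<Union>{}). \<forall>C\<in>{}. nzc C b \<noteq> 1} = {\<lambda>_. undefined}" by (simp add: ZNdom_def)
  have n0: "nzc (\<Union>{}) b = 0" for b :: "'a \<Rightarrow> nat" by (simp add: nzc_def)
  show ?case unfolding e by (simp only: n0 sum.insert finite.emptyI empty_iff sum.empty prod.empty power_0) simp
next
  case (insert C CC)
  define U where "U = \<Union>CC"
  have fC: "finite C" and fU: "finite U" using insert.prems insert.hyps by (auto simp: U_def)
  have CU: "C \<inter> U = {}"
  proof -
    have "C \<inter> C' = {}" if C': "C' \<in> CC" for C'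
    proof -
      have "C \<noteq> C'" using insert.hyps(2) C' by blast
      thus ?thesis using insert.prems(2) C' by simp
    qed
    thus ?thesis unfolding U_def by blast
  qed
  have un: "\<Union>(insert C CC) = C \<union> U" by (simp add: U_def)
  have PL: "C \<subseteq> C \<union> U" by simp
  have diff: "(C \<union> U) - C = U" using CU by blast
  define a where "a y = (if nzc C y \<noteq> 1 then R ^ nzc C y else 0)" for y :: "'a \<Rightarrow> nat"
  define bb where "bb x = (if (\<forall>C'\<in>CC. nzc C' x \<noteq> 1) then R ^ nzc U x else 0)" for x :: "'a \<Rightarrow> nat"
  have trm: "(if (\<forall>C'\<in>insert C CC. nzc C' (mrg C y x) \<noteq> 1) then R ^ nzc (C \<union> U) (mrg C y x) else 0)
      = a y * bb x" for x y
  proof -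
    have n1: "nzc C (mrg C y x) = nzc C y" unfolding nzc_def by (rule arg_cong[where f=card]) (auto simp: mrg_def)
    have n2: "nzc C' (mrg C y x) = nzc C' x" if "C' \<in> CC" for C'
    proof -
      have "C' \<subseteq> U" using that unfolding U_def by blast
      hence "C' \<inter> C = {}" using CU by blast
      thus ?thesis unfolding nzc_def by (intro arg_cong[where f=card]) (auto simp: mrg_def)
    qed
    have n3: "nzc (C \<union> U) (mrg C y x) = nzc C y + nzc U x"
    proof -
      have "{v \<in> C \<union> U. mrg C y x v \<noteq> 0} = {v \<in> C. y v \<noteq> 0} \<union> {v \<in> U. x v \<noteq> 0}"
        using CU by (auto simp: mrg_def)
      moreover have "card ({v \<in> C. y v \<noteq> 0} \<union> {v \<in> U. x v \<noteq> 0}) = card {v \<in> C. y v \<noteq> 0} + card {v \<in> U. x v \<noteq> 0}"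
        using CU fC fU by (intro card_Un_disjoint) auto
      ultimately show ?thesis by (simp add: nzc_def)
    qed
    show ?thesis using n1 n2 n3 by (auto simp: a_def bb_def power_add)
  qed
  have "(\<Sum>b\<in>{b\<in>ZNdom N (\<Union>(insert C CC)). \<forall>C'\<in>insert C CC. nzc C' b \<noteq> 1}. R ^ nzc (\<Union>(insert C CC)) b)
      = (\<Sum>b\<in>ZNdom N (C \<union> U). if (\<forall>C'\<in>insert C CC. nzc C' b \<noteq> 1) then R ^ nzc (C \<union> U) b else 0)"
    unfolding un using finite_ZNdom[of "C \<union> U" N] fC fU by (simp add: sum.inter_filter)
  also have "\<dots> = (\<Sum>x\<in>ZNdom N U. \<Sum>y\<in>ZNdom N C. a y * bb x)"
    by (subst sum_ZNdom_split[OF PL]) (simp only: diff trm)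
  also have "\<dots> = (\<Sum>y\<in>ZNdom N C. a y) * (\<Sum>x\<in>ZNdom N U. bb x)"
    by (simp add: sum_distrib_left sum_distrib_right mult.commute)
  also have "(\<Sum>y\<in>ZNdom N C. a y) = (\<Sum>b\<in>{b\<in>ZNdom N C. nzc C b \<noteq> 1}. R ^ nzc C b)"
    unfolding a_def using finite_ZNdom[OF fC] by (simp add: sum.inter_filter)
  also have "(\<Sum>x\<in>ZNdom N U. bb x) = (\<Sum>b\<in>{b\<in>ZNdom N (\<Union>CC). \<forall>C\<in>CC. nzc C b \<noteq> 1}. R ^ nzc (\<Union>CC) b)"
    unfolding bb_def U_def using finite_ZNdom[OF fU] by (simp add: sum.inter_filter U_def)
  also have "\<dots> = (\<Prod>C\<in>CC. \<Sum>b\<in>{b\<in>ZNdom N C. nzc C b \<noteq> 1}. R ^ nzc C b)"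
    using insert.IH insert.prems by blast
  finally show ?case using insert.hyps by simp
qed

lemma exp_minus_le: "0 \<le> (t::real) \<Longrightarrow> exp t - t \<le> exp (t\<^sup>2)"
proof (cases "t \<le> 1")
  case True
  assume t0: "0 \<le> t"
  have "exp t \<le> 1 + t + t\<^sup>2" using exp_bound[OF t0 True] by simp
  moreover have "1 + t\<^sup>2 \<le> exp (t\<^sup>2)" by (rule exp_ge_add_one_self)
  ultimately show ?thesis by linarith
next
  case False
  assume t0: "0 \<le> t"
  have "t \<le> t\<^sup>2" using False by (simp add: power2_eq_square)
  hence "exp t \<le> exp (t\<^sup>2)" by (simp only: exp_le_cancel_iff)
  thus ?thesis using t0 by linarith
qed

lemma prod_if_pow: "finite C \<Longrightarrow> (\<Prod>u\<in>C. if P u then (R::real) else 1) = R ^ card {u\<in>C. P u}"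
proof -
  assume "finite C"
  have "(\<Prod>u\<in>{u\<in>C. P u}. R) = (\<Prod>u\<in>C. if P u then R else 1)"
    using \<open>finite C\<close> by (rule prod.inter_filter)
  thus ?thesis by simp
qed

lemma class_bound:
  fixes R :: real
  assumes fC: "finite C" and N: "N \<ge> 1" and R: "R \<ge> 0"
  shows "(\<Sum>b\<in>{b\<in>ZNdom N C. nzc C b \<noteq> 1}. R ^ nzc C b)
      \<le> exp (((real N - 1) * R)\<^sup>2 * (if card C \<ge> 2 then real (card C) ^ 2 else 0))"
proof -
  define y where "y = (real N - 1) * R"
  have y0: "y \<ge> 0" using N R by (simp add: y_def)
  define v where "v = card C"
  have fZ: "finite (ZNdom N C)" by (rule finite_ZNdom[OF fC])
  have all: "(\<Sum>b\<in>ZNdom N C. R ^ nzc C b) = (1 + y) ^ v"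
  proof -
    have "(\<Sum>b\<in>ZNdom N C. R ^ nzc C b) = (\<Sum>b\<in>ZNdom N C. \<Prod>u\<in>C. if b u \<noteq> 0 then R else 1)"
      using fC by (simp add: prod_if_pow nzc_def)
    also have "\<dots> = (\<Prod>u\<in>C. \<Sum>a\<in>{..<N}. if a \<noteq> 0 then R else 1)"
      unfolding ZNdom_def using fC by (subst prod_sum_PiE) auto
    also have "(\<Sum>a\<in>{..<N}. if a \<noteq> 0 then R else 1) = 1 + y"
    proof -
      obtain M where M: "N = Suc M" using N by (cases N) auto
      have "(\<Sum>a\<in>{..<N}. if a \<noteq> 0 then R else 1) = 1 + (\<Sum>a<M. R)"
        unfolding M by (subst sum.lessThan_Suc_shift) simp
      thus ?thesis by (simp add: y_def M)
    qed
    finally show ?thesis by (simp add: v_def)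
  qed
  have singles: "real v * y \<le> (\<Sum>b\<in>{b\<in>ZNdom N C. nzc C b = 1}. R ^ nzc C b)"
  proof -
    define \<phi> where "\<phi> p = (\<lambda>u\<in>C. if u = fst p then snd p else 0)" for p :: "'a \<times> nat"
    have inj: "inj_on \<phi> (C \<times> {1..<N})"
    proof (rule inj_onI)
      fix p p' assume p: "p \<in> C \<times> {1..<N}" and p': "p' \<in> C \<times> {1..<N}" and e: "\<phi> p = \<phi> p'"
      have "\<phi> p (fst p) = snd p" using p by (auto simp: \<phi>_def mem_Times_iff)
      moreover have "\<phi> p' (fst p) = (if fst p = fst p' then snd p' else 0)" using p p' by (auto simp: \<phi>_def mem_Times_iff)
      ultimately have "fst p = fst p' \<and> snd p = snd p'" using e p by (auto split: if_splits)
      thus "p = p'" by (simp add: prod_eq_iff)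
    qed
    have img: "\<phi> ` (C \<times> {1..<N}) \<subseteq> {b\<in>ZNdom N C. nzc C b = 1}"
    proof
      fix b assume "b \<in> \<phi> ` (C \<times> {1..<N})"
      then obtain u a where ua: "u \<in> C" "a \<in> {1..<N}" "b = \<phi> (u, a)" by auto
      have "{v \<in> C. b v \<noteq> 0} = {u}" using ua by (auto simp: \<phi>_def)
      moreover have "b \<in> ZNdom N C" using ua by (auto simp: \<phi>_def ZNdom_def)
      ultimately show "b \<in> {b\<in>ZNdom N C. nzc C b = 1}" by (simp add: nzc_def)
    qed
    have "card (C \<times> {1..<N}) \<le> card {b\<in>ZNdom N C. nzc C b = 1}"
      using card_inj_on_le[OF inj img] fZ by simp
    hence "card C * (N - 1) \<le> card {b\<in>ZNdom N C. nzc C b = 1}"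
      by (simp add: card_cartesian_product)
    hence "real (card C * (N - 1)) \<le> real (card {b\<in>ZNdom N C. nzc C b = 1})"
      by (simp only: of_nat_le_iff)
    hence "real v * (real N - 1) \<le> real (card {b\<in>ZNdom N C. nzc C b = 1})"
      using N by (simp add: v_def of_nat_diff)
    hence "real v * (real N - 1) * R \<le> real (card {b\<in>ZNdom N C. nzc C b = 1}) * R"
      using R by (intro mult_right_mono) auto
    also have "\<dots> = (\<Sum>b\<in>{b\<in>ZNdom N C. nzc C b = 1}. R ^ nzc C b)" by simp
    finally show ?thesis by (simp add: y_def mult.assoc)
  qed
  have split: "(\<Sum>b\<in>ZNdom N C. R ^ nzc C b) = (\<Sum>b\<in>{b\<in>ZNdom N C. nzc C b \<noteq> 1}. R ^ nzc C b) + (\<Sum>b\<in>{b\<in>ZNdom N C. nzc C b = 1}. R ^ nzc C b)"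
    using fZ by (subst sum.union_disjoint[symmetric]) (auto intro: sum.cong)
  have main: "(\<Sum>b\<in>{b\<in>ZNdom N C. nzc C b \<noteq> 1}. R ^ nzc C b) \<le> (1 + y) ^ v - real v * y"
    using all singles split by linarith
  show ?thesis
  proof (cases "v \<ge> 2")
    case True
    have "(1 + y) ^ v \<le> exp y ^ v" using y0 by (intro power_mono) (auto simp: add.commute)
    also have "\<dots> = exp (real v * y)" by (simp add: exp_of_nat_mult)
    finally have "(1 + y) ^ v - real v * y \<le> exp (real v * y) - real v * y" by simp
    also have "\<dots> \<le> exp ((real v * y)\<^sup>2)" using y0 by (intro exp_minus_le) simp
    finally have X: "(1 + y) ^ v - real v * y \<le> exp ((real v * y)\<^sup>2)" .
    have eq: "(real v * y)\<^sup>2 = ((real N - 1) * R)\<^sup>2 * (if card C \<ge> 2 then real (card C) ^ 2 else 0)"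
      using True by (simp add: y_def v_def power_mult_distrib)
    show ?thesis using main X unfolding eq by linarith
  next
    case False
    hence "v = 0 \<or> v = 1" by auto
    hence "(1 + y) ^ v - real v * y = 1" by auto
    thus ?thesis using main False by (simp add: v_def[symmetric])
  qed
qed

context setting begin

abbreviation "CC \<equiv> Cm ` L"

lemma CC_props: "finite CC" "\<forall>C\<in>CC. finite C" "\<forall>C\<in>CC. \<forall>C'\<in>CC. C \<noteq> C' \<longrightarrow> C \<inter> C' = {}" "\<Union>CC = L"
proof -
  show "finite CC" using fL by simp
  show "\<forall>C\<in>CC. finite C"
  proof
    fix C assume "C \<in> CC"
    then obtain x where "C = Cm x" by blast
    thus "finite C" using finite_subset[OF Hcomp_sub fL] by simp
  qed
  show "\<forall>C\<in>CC. \<forall>C'\<in>CC. C \<noteq> C' \<longrightarrow> C \<inter> C' = {}"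
  proof (intro ballI impI)
    fix C C' assume "C \<in> CC" "C' \<in> CC" "C \<noteq> C'"
    then obtain x y where "C = Cm x" "C' = Cm y" by blast
    thus "C \<inter> C' = {}" using Hcomp_disj[of V n HE x y] \<open>C \<noteq> C'\<close> by auto
  qed
  show "\<Union>CC = L"
  proof
    show "\<Union>CC \<subseteq> L"
    proof
      fix v assume "v \<in> \<Union>CC"
      then obtain x where "v \<in> Cm x" by blast
      thus "v \<in> L" using Hcomp_sub[of V n HE x] by blast
    qed
    show "L \<subseteq> \<Union>CC"
    proof
      fix v assume v: "v \<in> L"
      have "v \<in> Cm v" by (rule Hcomp_refl[OF v])
      thus "v \<in> \<Union>CC" using v by blast
    qed
  qed
qed

definition adm :: "('v \<times> nat \<Rightarrow> nat) \<Rightarrow> bool" where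
  "adm b \<longleftrightarrow> (\<forall>C\<in>CC. nzc C b \<noteq> 1)"

lemma adm_sum_bound:
  fixes R :: real
  assumes R: "R \<ge> 0"
  shows "(\<Sum>b\<in>{b\<in>ZNdom N L. adm b}. R ^ nzc L b) \<le> exp (((real N - 1) * R)\<^sup>2 * real (znorm V EI ev n K z))"
proof -
  have "(\<Sum>b\<in>{b\<in>ZNdom N L. adm b}. R ^ nzc L b) = (\<Sum>b\<in>{b\<in>ZNdom N (\<Union>CC). \<forall>C\<in>CC. nzc C b \<noteq> 1}. R ^ nzc (\<Union>CC) b)"
    unfolding adm_def CC_props(4) ..
  also have "\<dots> = (\<Prod>C\<in>CC. \<Sum>b\<in>{b\<in>ZNdom N C. nzc C b \<noteq> 1}. R ^ nzc C b)"
    by (rule class_prod[OF CC_props(1-3)])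
  also have "\<dots> \<le> (\<Prod>C\<in>CC. exp (((real N - 1) * R)\<^sup>2 * (if card C \<ge> 2 then real (card C) ^ 2 else 0)))"
  proof (rule prod_mono)
    fix C assume C: "C \<in> CC"
    have fC: "finite C" using C CC_props(2) by blast
    show "0 \<le> (\<Sum>b\<in>{b\<in>ZNdom N C. nzc C b \<noteq> 1}. R ^ nzc C b) \<and>
          (\<Sum>b\<in>{b\<in>ZNdom N C. nzc C b \<noteq> 1}. R ^ nzc C b) \<le> exp (((real N - 1) * R)\<^sup>2 * (if card C \<ge> 2 then real (card C) ^ 2 else 0))"
      using class_bound[OF fC N1 R] R by (auto intro: sum_nonneg)
  qed
  also have "\<dots> = exp (\<Sum>C\<in>CC. ((real N - 1) * R)\<^sup>2 * (if card C \<ge> 2 then real (card C) ^ 2 else 0))"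
    using CC_props(1) by (simp add: exp_sum)
  also have "(\<Sum>C\<in>CC. ((real N - 1) * R)\<^sup>2 * (if card C \<ge> 2 then real (card C) ^ 2 else 0))
      = ((real N - 1) * R)\<^sup>2 * real (znorm V EI ev n K z)"
  proof -
    have "(\<Sum>C\<in>CC. (if card C \<ge> 2 then real (card C) ^ 2 else 0)) = (\<Sum>C\<in>{C\<in>CC. card C \<ge> 2}. real (card C) ^ 2)"
      using CC_props(1) by (simp add: sum.inter_filter)
    also have "\<dots> = real (znorm V EI ev n K z)" by (simp add: znorm_def)
    finally show ?thesis by (simp add: sum_distrib_left[symmetric])
  qed
  finally show ?thesis .
qed

lemma nonadm_vanish:
  assumes b: "b \<in> ZNdom N L" and na: "\<not> adm b"
  shows "fhat N L g b = 0"
proof -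
  obtain C where C: "C \<in> CC" "nzc C b = 1" using na by (auto simp: adm_def)
  then obtain w where w: "w \<in> L" "C = Cm w" by blast
  show ?thesis by (rule fhat_vanish[OF b w(1)]) (use C w in \<open>simp add: nzc_def\<close>)
qed

lemma walsh_bound:
  fixes R :: real
  assumes R: "R > 0"
  shows "walsh_level N L g d \<le> exp (((real N - 1) * R)\<^sup>2 * real (znorm V EI ev n K z)) / R ^ d"
proof -
  have fZ: "finite (ZNdom N L)" by (rule finite_ZNdom[OF fL])
  define f where "f b = (if adm b then R ^ nzc L b / R ^ d else 0)" for b
  have f0: "f b \<ge> 0" for b using R by (simp add: f_def)
  have "walsh_level N L g d = (\<Sum>b\<in>{b\<in>ZNdom N L. nzc L b = d}. cmod (fhat N L g b))"
    unfolding walsh_level_def nzc_def ..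
  also have "\<dots> \<le> (\<Sum>b\<in>{b\<in>ZNdom N L. nzc L b = d}. f b)"
  proof (rule sum_mono)
    fix b assume b: "b \<in> {b\<in>ZNdom N L. nzc L b = d}"
    show "cmod (fhat N L g b) \<le> f b"
    proof (cases "adm b")
      case True thus ?thesis using fhat_le1[of b] b R by (simp add: f_def)
    next
      case False thus ?thesis using nonadm_vanish[of b] b by (simp add: f_def)
    qed
  qed
  also have "\<dots> \<le> (\<Sum>b\<in>ZNdom N L. f b)"
    using fZ f0 by (intro sum_mono2) auto
  also have "\<dots> = (\<Sum>b\<in>{b\<in>ZNdom N L. adm b}. R ^ nzc L b) / R ^ d"
    using fZ by (auto simp: f_def sum.inter_filter sum_divide_distrib intro!: sum.cong)
  also have "\<dots> \<le> exp (((real N - 1) * R)\<^sup>2 * real (znorm V EI ev n K z)) / R ^ d"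
    using adm_sum_bound[of R] R by (intro divide_right_mono) auto
  finally show ?thesis .
qed

end

lemma final_ineq:
  fixes Nr Tt Z :: real and d :: nat
  assumes Nr: "Nr \<ge> 2" and d: "d \<ge> 1" and Tt: "Tt > 0" and Z0: "0 \<le> Z" and ZT: "Z \<le> Tt"
  defines "R \<equiv> sqrt (real d / (2 * Tt)) / (Nr - 1)"
  shows "R > 0" and "exp (((Nr - 1) * R)\<^sup>2 * Z) / R ^ d \<le> (20 * Nr\<^sup>2 * Tt / real d) powr (real d / 2)"
proof -
  define A where "A = real d / (2 * Tt)"
  have A0: "A > 0" using d Tt by (simp add: A_def)
  show R0: "R > 0" using A0 Nr by (simp add: R_def A_def[symmetric])
  define a where "a = real d / 2"
  have a0: "a \<ge> 0" by (simp add: a_def)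
  have NR: "(Nr - 1) * R = sqrt A" using Nr by (simp add: R_def A_def)
  hence NR2: "((Nr - 1) * R)\<^sup>2 = A" using A0 by simp
  have e1: "exp (A * Z) \<le> exp a"
  proof -
    have "A * Z \<le> A * Tt" using A0 ZT by (intro mult_left_mono) auto
    also have "A * Tt = a" using Tt by (simp add: A_def a_def)
    finally show ?thesis by simp
  qed
  have Rd: "R ^ d = (A / (Nr - 1)\<^sup>2) powr a"
  proof -
    have X: "(Nr - 1)\<^sup>2 * R\<^sup>2 = A" using NR2 by (simp only: power_mult_distrib)
    have "(Nr - 1)\<^sup>2 \<noteq> 0" using Nr by simp
    hence "R\<^sup>2 = A / (Nr - 1)\<^sup>2" using X by (simp add: eq_divide_eq mult.commute)
    hence "(A / (Nr - 1)\<^sup>2) powr a = (R\<^sup>2) powr a" by simp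
    also have "\<dots> = (R powr 2) powr a" using R0 by (simp add: powr_realpow)
    also have "\<dots> = R powr real d" by (simp add: powr_powr a_def)
    also have "\<dots> = R ^ d" using R0 by (simp add: powr_realpow)
    finally show ?thesis by simp
  qed
  have ea: "exp a = exp 1 powr a" by (simp add: powr_def)
  have "exp (((Nr - 1) * R)\<^sup>2 * Z) / R ^ d \<le> exp a / R ^ d"
    unfolding NR2 using e1 R0 by (intro divide_right_mono) auto
  also have "\<dots> = (exp 1 / (A / (Nr - 1)\<^sup>2)) powr a" unfolding Rd ea by (simp add: powr_divide powr_mult)
  also have "\<dots> \<le> (20 * Nr\<^sup>2 * Tt / real d) powr a"
  proof (rule powr_mono2[OF a0])
    show "0 \<le> exp 1 / (A / (Nr - 1)\<^sup>2)" using A0 by simp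
    have "exp 1 / (A / (Nr - 1)\<^sup>2) = exp 1 * (Nr - 1)\<^sup>2 * 2 * Tt / real d"
      using d Tt Nr by (simp add: A_def field_simps)
    also have "\<dots> \<le> 20 * Nr\<^sup>2 * Tt / real d"
    proof -
      have "(Nr - 1)\<^sup>2 \<le> Nr\<^sup>2" using Nr by (intro power_mono) auto
      hence "exp 1 * (Nr - 1)\<^sup>2 * 2 \<le> 3 * Nr\<^sup>2 * 2"
        using exp_le by (intro mult_right_mono mult_mono) auto
      moreover have "3 * Nr\<^sup>2 * 2 \<le> 20 * Nr\<^sup>2" by simp
      ultimately have "exp 1 * (Nr - 1)\<^sup>2 * 2 \<le> 20 * Nr\<^sup>2" by linarith
      hence "exp 1 * (Nr - 1)\<^sup>2 * 2 * Tt \<le> 20 * Nr\<^sup>2 * Tt" using Tt by (intro mult_right_mono) auto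
      thus ?thesis using d by (intro divide_right_mono) auto
    qed
    finally show "exp 1 / (A / (Nr - 1)\<^sup>2) \<le> 20 * Nr\<^sup>2 * Tt / real d" .
  qed
  finally show "exp (((Nr - 1) * R)\<^sup>2 * Z) / R ^ d \<le> (20 * Nr\<^sup>2 * Tt / real d) powr (real d / 2)"
    by (simp add: a_def)
qed

context setting begin

lemma edges_Z:
  assumes k2: "k \<ge> 2"
  shows "(k - 1) * card T \<le> znorm V EI ev n K z"
proof (cases "T = {}")
  case True thus ?thesis by simp
next
  case False
  have k1: "k \<ge> 1" using k2 by simp
  have inj: "inj_on Vt T" using vl_inj[OF dl rs nc k1] by (auto intro: inj_onI)
  have cT: "card HE = card T" unfolding Hedges_eq using card_image[OF inj] .
  have fHE: "finite HE" unfolding Hedges_eq using fT by simp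
  have neHE: "HE \<noteq> {}" unfolding Hedges_eq using False by simp
  have "\<not> real (card (\<Union>HE)) \<le> real (card HE) * (real k - 1)"
  proof
    assume "real (card (\<Union>HE)) \<le> real (card HE) * (real k - 1)"
    hence "cyclic k EI ev K z" unfolding cyclic_def using fHE neHE by (intro disjI2 exI[of _ HE]) auto
    thus False using nc by simp
  qed
  hence c1: "(k - 1) * card T \<le> card (\<Union>HE)"
  proof -
    assume h: "\<not> real (card (\<Union>HE)) \<le> real (card HE) * (real k - 1)"
    have "real ((k - 1) * card T) = real (card HE) * (real k - 1)" using k1 cT by (simp add: of_nat_diff)
    hence "real ((k - 1) * card T) \<le> real (card (\<Union>HE))" using h by linarith
    thus ?thesis by (simp only: of_nat_le_iff)
  qed
  define CC2 where "CC2 = {C \<in> CC. card C \<ge> 2}"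
  have sub: "\<Union>HE \<subseteq> \<Union>CC2"
  proof
    fix v assume "v \<in> \<Union>HE"
    then obtain t where t: "t \<in> T" and vt: "v \<in> Vt t" unfolding Hedges_eq by blast
    have vL: "v \<in> L" using VtL[OF t] vt by blast
    have "Vt t \<subseteq> Cm v"
      by (rule Hcomp_closed) (use t vt vL Hcomp_refl[OF vL] VtL[OF t] in \<open>auto simp: Hedges_eq\<close>)
    hence "card (Vt t) \<le> card (Cm v)" using finite_subset[OF Hcomp_sub fL] by (intro card_mono) auto
    hence "card (Cm v) \<ge> 2" using card_vl[OF dl rs t] k2 by simp
    thus "v \<in> \<Union>CC2" using vL Hcomp_refl[OF vL] by (auto simp: CC2_def)
  qed
  have fCC2: "finite CC2" using CC_props(1) by (simp add: CC2_def)
  have "card (\<Union>HE) \<le> card (\<Union>CC2)"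
    using sub fCC2 CC_props(2) by (intro card_mono) (auto simp: CC2_def)
  also have "\<dots> \<le> (\<Sum>C\<in>CC2. card C)" by (rule card_Union_le_sum_card)
  also have "\<dots> \<le> (\<Sum>C\<in>CC2. card C ^ 2)" by (intro sum_mono) (simp add: power2_eq_square)
  also have "\<dots> = znorm V EI ev n K z" by (simp add: znorm_def CC2_def)
  finally show ?thesis using c1 by simp
qed

lemma g_max:
  assumes Z: "real (znorm V EI ev n K z) \<le> M" and M: "M \<ge> 0"
  shows "\<bar>g x\<bar> \<le> real N powr M"
proof -
  have "g x \<le> (\<Prod>t\<in>T. real N ^ (k - 1))"
    unfolding g_eq by (rule prod_mono) (use Ff_nonneg[OF N1 dl rs] Ff_le[OF N1 dl rs] in auto)
  also have "\<dots> = real N ^ ((k - 1) * card T)" by (simp add: power_mult)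
  also have "\<dots> = real N powr real ((k - 1) * card T)" using N1 by (subst powr_realpow) auto
  also have "\<dots> \<le> real N powr M"
  proof (rule powr_mono)
    show "1 \<le> real N" using N1 by simp
    show "real ((k - 1) * card T) \<le> M"
    proof (cases "k \<ge> 2")
      case True
      have "real ((k - 1) * card T) \<le> real (znorm V EI ev n K z)" using edges_Z[OF True] by (simp only: of_nat_le_iff)
      thus ?thesis using Z by linarith
    next
      case False thus ?thesis using M by simp
    qed
  qed
  finally show ?thesis using g_nonneg[of x] by simp
qed

end

theorem lemma6p5:
  fixes N k n K :: nat and V :: "'v set" and EI :: "'e set" and ev :: "'e \<Rightarrow> 'v list"
    and mu :: "'e \<Rightarrow> nat list \<Rightarrow> real" and \<alpha> \<gamma> :: real
    and z :: "'e \<Rightarrow> nat \<Rightarrow> nat list \<Rightarrow> nat list option"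
  assumes "N \<ge> 2"
    and "dlk_graph N k V EI ev mu"
    and "restr_seq N k EI ev n \<alpha> K z"
    and "\<not> cyclic k EI ev K z"
    and "0 < \<gamma>" and "\<gamma> < 1"
    and "real (znorm V EI ev n K z) \<le> \<gamma> * real n"
  shows "bounded_fn N (V \<times> {..<n}) n (20 * real N ^ 2) (\<gamma> * real n * log 2 (real N)) 0
           (gz N k EI ev mu K z)"
proof -
  interpret setting N k V EI ev mu n \<alpha> K z using assms(1-4) by unfold_locales
  have N2: "real N \<ge> 2" using assms(1) by simp
  have g0: "0 < \<gamma>" and g1: "\<gamma> < 1" and Zg: "real (znorm V EI ev n K z) \<le> \<gamma> * real n" using assms(5-7) by auto
  define s where "s = \<gamma> * real n * log 2 (real N)"
  define Cc where "Cc = 20 * real N ^ 2"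
  have logN: "log 2 (real N) \<ge> 1"
  proof -
    have "log 2 2 \<le> log 2 (real N)" using N2 by (subst log_le_cancel_iff) auto
    thus ?thesis by simp
  qed
  have s_ge: "s \<ge> \<gamma> * real n"
  proof -
    have "\<gamma> * real n * 1 \<le> \<gamma> * real n * log 2 (real N)" using g0 logN by (intro mult_left_mono) auto
    thus ?thesis by (simp add: s_def)
  qed
  have gn0: "\<gamma> * real n \<ge> 0" using g0 by simp
  have Cc0: "Cc > 0" using N2 by (simp add: Cc_def)
  show ?thesis unfolding s_def[symmetric] Cc_def[symmetric] bounded_fn_def
  proof (intro conjI)
    show "\<forall>x\<in>ZNdom N L. 0 \<le> g x" using g_nonneg by blast
    show "\<bar>expect N L g - 1\<bar> \<le> 0" using expect_g by simp
    show "\<forall>d. 1 \<le> d \<and> real d \<le> real n / Cc\<^sup>2 \<longrightarrow> walsh_level N L g d \<le> FC Cc n d s"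
    proof (intro allI impI)
      fix d :: nat assume d: "1 \<le> d \<and> real d \<le> real n / Cc\<^sup>2"
      have d1: "d \<ge> 1" using d by simp
      have "1 \<le> real n / Cc\<^sup>2" using d by linarith
      hence "Cc\<^sup>2 \<le> real n" using Cc0 by (simp add: le_divide_eq)
      moreover have "Cc\<^sup>2 > 0" using Cc0 by simp
      ultimately have n0: "real n > 0" by linarith
      define Tt where "Tt = sqrt (real n * max s (real d))"
      have mx: "max s (real d) \<ge> \<gamma> * real n" using s_ge by linarith
      have mx0: "max s (real d) > 0" using d1 by linarith
      have Tt0: "Tt > 0" using n0 mx0 by (simp add: Tt_def)
      have gT: "\<gamma> * real n \<le> Tt"
      proof -
        have "(\<gamma> * real n)\<^sup>2 = \<gamma> * \<gamma> * (real n * real n)" by (simp add: power2_eq_square)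
        also have "\<dots> \<le> 1 * \<gamma> * (real n * real n)" using g0 g1 by (intro mult_right_mono) auto
        also have "\<dots> = real n * (\<gamma> * real n)" by simp
        also have "\<dots> \<le> real n * max s (real d)" using mx n0 by (intro mult_left_mono) auto
        finally have "sqrt ((\<gamma> * real n)\<^sup>2) \<le> Tt" unfolding Tt_def by (rule real_sqrt_le_mono)
        thus ?thesis using gn0 by simp
      qed
      define Z where "Z = real (znorm V EI ev n K z)"
      have Z0: "Z \<ge> 0" by (simp add: Z_def)
      have ZT: "Z \<le> Tt" using Zg gT by (simp add: Z_def)
      define R where "R = sqrt (real d / (2 * Tt)) / (real N - 1)"
      have R0: "R > 0" using final_ineq(1)[OF N2 d1 Tt0 Z0 ZT] by (simp add: R_def)
      have "walsh_level N L g d \<le> exp (((real N - 1) * R)\<^sup>2 * Z) / R ^ d"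
        using walsh_bound[OF R0] by (simp add: Z_def)
      also have "\<dots> \<le> (20 * (real N)\<^sup>2 * Tt / real d) powr (real d / 2)"
        using final_ineq(2)[OF N2 d1 Tt0 Z0 ZT] by (simp add: R_def)
      also have "\<dots> = FC Cc n d s" by (simp add: FC_def Cc_def Tt_def)
      finally show "walsh_level N L g d \<le> FC Cc n d s" .
    qed
    show "\<forall>x\<in>ZNdom N L. \<bar>g x\<bar> \<le> 2 powr s"
    proof
      fix x
      have "\<bar>g x\<bar> \<le> real N powr (\<gamma> * real n)" by (rule g_max[OF Zg gn0])
      also have "real N powr (\<gamma> * real n) = 2 powr s"
      proof -
        have "2 powr s = (2 powr log 2 (real N)) powr (\<gamma> * real n)"
          by (simp add: powr_powr s_def mult.commute)
        also have "2 powr log 2 (real N) = real N" using N2 by simp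
        finally show ?thesis by simp
      qed
      finally show "\<bar>g x\<bar> \<le> 2 powr s" .
    qed
  qed
qed

end
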